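(* Let $\Gamma_n$ ($n\in\mathbb N$) be a sequence of nonatomic routing games on a fixed graph with fixed OD pairs $\mathcal I$, path sets $\mathcal P^i$ and edge costs $(c_e)_{e\in\mathcal E}$, where in $\Gamma_n$ OD pair $i$ has demand $m_n^i\ge 0$, with total inflow $M_n=\sum_i m_n^i>0$ and relative inflows $\lambda_n^i=m_n^i/M_n$. Let $c$ be a benchmark for $(c_e)$ at $\omega\in\{0,\infty\}$, and for each $i$ let $\alpha^i=\min_{p\in\mathcal P^i}\max_{e\in p}\alpha_e$ with $\alpha_e=\lim_{x\to\omega}c_e(x)/c(x)$. Suppose that (a) $\lim_{n\to\infty}M_n=\omega$; (b) $\alpha^i<\infty$ for all $i\in\mathcal I$; (c) $\liminf_{n\to\infty}\sum_{i:\alpha^i>0}\lambda_n^i>0$. Then $\mathrm{PoA}(\Gamma_n)\to 1$ as $n\to\infty$.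
   Context: A nonatomic routing game consists of: a finite directed multigraph with edge set $\mathcal E$; a finite set $\mathcal I$ of OD pairs, each $i$ with demand $m^i\ge 0$ and a nonempty finite set $\mathcal P^i$ of paths from its origin to its destination, the $\mathcal P^i$ pairwise disjoint, $\mathcal P=\bigcup_i\mathcal P^i$; and continuous nondecreasing edge costs $c_e:[0,\infty)\to[0,\infty)$. Total inflow $M=\sum_i m^i>0$. Feasible flows: $f\in\mathbb R_+^{\mathcal P}$ with $\sum_{p\in\mathcal P^i}f_p=m^i$; loads $x_e=\sum_{p\ni e}f_p$; path costs $c_p(f)=\sum_{e\in p}c_e(x_e)$. A Wardrop equilibrium is a feasible $f^*$ with $c_p(f^* )\le c_{p'}(f^* )$ whenever $p,p'\in\mathcal P^i$ and $f^*_p>0$. Social cost $L(x)=\sum_e x_ec_e(x_e)$; $\mathrm{Opt}$ its minimum over feasible loads, $\mathrm{Eq}=L(x^* )$ at an equilibrium load (independent of the equilibrium), $\mathrm{PoA}=\mathrm{Eq}/\mathrm{Opt}$ (set to $1$ if $\mathrm{Opt}=0$). A function $g:(0,\infty)\to(0,\infty)$ is regularly varying at $\omega$ if $\lim_{t\to\omega}g(tx)/g(t)$ is finite and nonzero for all $x>0$; a regularly varying (at $\omega$) function $c:(0,\infty)\to(0,\infty)$ is a benchmark for $(c_e)$ at $\omega$ if $\alpha_e=\lim_{x\to\omega}c_e(x)/c(x)\in[0,\infty]$ exists for every edge $e$. An OD pair $i$ is called tight if $0<\alpha^i<\infty$. *)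

theory Defs
  imports "HOL-Analysis.Analysis"
begin

definition is_path :: "('e \<Rightarrow> 'v) \<Rightarrow> ('e \<Rightarrow> 'v) \<Rightarrow> 'e set \<Rightarrow> 'v \<Rightarrow> 'v \<Rightarrow> 'e list \<Rightarrow> bool" where
  "is_path src tgt E u w p \<longleftrightarrow>
     set p \<subseteq> E \<and>
     (\<forall>k. Suc k < length p \<longrightarrow> tgt (p ! k) = src (p ! Suc k)) \<and>
     (p = [] \<longrightarrow> u = w) \<and>
     (p \<noteq> [] \<longrightarrow> src (p ! 0) = u \<and> tgt (last p) = w) \<and>
     distinct (u # map tgt p)"

definition routing_network ::
  "('e \<Rightarrow> 'v) \<Rightarrow> ('e \<Rightarrow> 'v) \<Rightarrow> 'e set \<Rightarrow> 'i set \<Rightarrow> ('i \<Rightarrow> 'v) \<Rightarrow> ('i \<Rightarrow> 'v)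
   \<Rightarrow> ('i \<Rightarrow> 'e list set) \<Rightarrow> ('e \<Rightarrow> real \<Rightarrow> real) \<Rightarrow> bool" where
  "routing_network src tgt E I orig dest P c \<longleftrightarrow>
     finite E \<and> finite I \<and>
     (\<forall>i\<in>I. finite (P i) \<and> P i \<noteq> {} \<and> (\<forall>p\<in>P i. is_path src tgt E (orig i) (dest i) p)) \<and>
     (\<forall>i\<in>I. \<forall>j\<in>I. i \<noteq> j \<longrightarrow> P i \<inter> P j = {}) \<and>
     (\<forall>e\<in>E. continuous_on {0..} (c e) \<and> mono_on {0..} (c e) \<and> (\<forall>x\<ge>0. c e x \<ge> 0))"

definition all_paths :: "'i set \<Rightarrow> ('i \<Rightarrow> 'e list set) \<Rightarrow> 'e list set" where
  "all_paths I P = (\<Union>i\<in>I. P i)"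

definition feasible_flow :: "'i set \<Rightarrow> ('i \<Rightarrow> 'e list set) \<Rightarrow> ('i \<Rightarrow> real) \<Rightarrow> ('e list \<Rightarrow> real) \<Rightarrow> bool" where
  "feasible_flow I P m f \<longleftrightarrow>
     (\<forall>p\<in>all_paths I P. f p \<ge> 0) \<and> (\<forall>i\<in>I. (\<Sum>p\<in>P i. f p) = m i)"

definition edge_load :: "'i set \<Rightarrow> ('i \<Rightarrow> 'e list set) \<Rightarrow> ('e list \<Rightarrow> real) \<Rightarrow> 'e \<Rightarrow> real" where
  "edge_load I P f e = (\<Sum>p\<in>{p\<in>all_paths I P. e \<in> set p}. f p)"

definition path_cost :: "('e \<Rightarrow> real \<Rightarrow> real) \<Rightarrow> 'i set \<Rightarrow> ('i \<Rightarrow> 'e list set) \<Rightarrow> ('e list \<Rightarrow> real) \<Rightarrow> 'e list \<Rightarrow> real" where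
  "path_cost c I P f p = (\<Sum>e\<in>set p. c e (edge_load I P f e))"

definition wardrop_eq :: "('e \<Rightarrow> real \<Rightarrow> real) \<Rightarrow> 'i set \<Rightarrow> ('i \<Rightarrow> 'e list set) \<Rightarrow> ('i \<Rightarrow> real) \<Rightarrow> ('e list \<Rightarrow> real) \<Rightarrow> bool" where
  "wardrop_eq c I P m f \<longleftrightarrow> feasible_flow I P m f \<and>
     (\<forall>i\<in>I. \<forall>p\<in>P i. \<forall>p'\<in>P i. f p > 0 \<longrightarrow> path_cost c I P f p \<le> path_cost c I P f p')"

definition social_cost :: "'e set \<Rightarrow> ('e \<Rightarrow> real \<Rightarrow> real) \<Rightarrow> ('e \<Rightarrow> real) \<Rightarrow> real" where
  "social_cost E c x = (\<Sum>e\<in>E. x e * c e (x e))"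

definition opt_cost :: "'e set \<Rightarrow> ('e \<Rightarrow> real \<Rightarrow> real) \<Rightarrow> 'i set \<Rightarrow> ('i \<Rightarrow> 'e list set) \<Rightarrow> ('i \<Rightarrow> real) \<Rightarrow> real" where
  "opt_cost E c I P m = Inf {social_cost E c (edge_load I P f) | f. feasible_flow I P m f}"

text \<open>Equilibrium social cost (well defined: independent of the chosen equilibrium).\<close>
definition eq_cost :: "'e set \<Rightarrow> ('e \<Rightarrow> real \<Rightarrow> real) \<Rightarrow> 'i set \<Rightarrow> ('i \<Rightarrow> 'e list set) \<Rightarrow> ('i \<Rightarrow> real) \<Rightarrow> real" where
  "eq_cost E c I P m = social_cost E c (edge_load I P (SOME f. wardrop_eq c I P m f))"

definition PoA :: "'e set \<Rightarrow> ('e \<Rightarrow> real \<Rightarrow> real) \<Rightarrow> 'i set \<Rightarrow> ('i \<Rightarrow> 'e list set) \<Rightarrow> ('i \<Rightarrow> real) \<Rightarrow> real" where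
  "PoA E c I P m = (if opt_cost E c I P m = 0 then 1 else eq_cost E c I P m / opt_cost E c I P m)"

text \<open>The point \<omega> \<in> {0,\<infinity>} is represented by the filter F: at_right 0 or at_top.\<close>

definition regularly_varying :: "real filter \<Rightarrow> (real \<Rightarrow> real) \<Rightarrow> bool" where
  "regularly_varying F g \<longleftrightarrow> (\<forall>x>0. g x > 0) \<and>
     (\<forall>x>0. \<exists>L::real. L \<noteq> 0 \<and> ((\<lambda>t. g (t * x) / g t) \<longlongrightarrow> L) F)"

definition benchmark :: "real filter \<Rightarrow> (real \<Rightarrow> real) \<Rightarrow> 'e set \<Rightarrow> ('e \<Rightarrow> real \<Rightarrow> real) \<Rightarrow> bool" where
  "benchmark F cb E c \<longleftrightarrow> regularly_varying F cb \<and>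
     (\<forall>e\<in>E. \<exists>a::ereal. ((\<lambda>x. ereal (c e x / cb x)) \<longlongrightarrow> a) F)"

definition alpha_edge :: "real filter \<Rightarrow> (real \<Rightarrow> real) \<Rightarrow> ('e \<Rightarrow> real \<Rightarrow> real) \<Rightarrow> 'e \<Rightarrow> ereal" where
  "alpha_edge F cb c e = Lim F (\<lambda>x. ereal (c e x / cb x))"

text \<open>\<alpha>^i = min over paths of max over edges of \<alpha>_e (max over the empty edge set of the
  trivial path is taken to be 0; all \<alpha>_e are \<ge> 0).\<close>
definition alpha_od :: "real filter \<Rightarrow> (real \<Rightarrow> real) \<Rightarrow> ('e \<Rightarrow> real \<Rightarrow> real) \<Rightarrow> ('i \<Rightarrow> 'e list set) \<Rightarrow> 'i \<Rightarrow> ereal" where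
  "alpha_od F cb c P i = Min ((\<lambda>p. Max (insert 0 (alpha_edge F cb c ` set p))) ` P i)"

end

theory Submission
  imports Defs
begin


definition GG :: "(real \<Rightarrow> real) \<Rightarrow> real \<Rightarrow> real" where
  "GG g x = integral {0..x} g"

locale cost_fn =
  fixes g :: "real \<Rightarrow> real"
  assumes cont: "continuous_on {0..} g" and mono: "mono_on {0..} g" and nonneg: "\<And>x. x \<ge> 0 \<Longrightarrow> g x \<ge> 0"
begin

lemma integrable: "0 \<le> a \<Longrightarrow> g integrable_on {a..b}"
  by (rule integrable_continuous_interval) (rule continuous_on_subset[OF cont], auto)

lemma int_bounds:
  assumes "0 \<le> a" "a \<le> b"
  shows "(b - a) * g a \<le> integral {a..b} g" "integral {a..b} g \<le> (b - a) * g b"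
proof -
  have "integral {a..b} (\<lambda>x. g a) \<le> integral {a..b} g"
    by (rule integral_le) (use assms integrable in \<open>auto intro!: mono_onD[OF mono]\<close>)
  then show "(b - a) * g a \<le> integral {a..b} g" using assms by simp
  have "integral {a..b} g \<le> integral {a..b} (\<lambda>x. g b)"
    by (rule integral_le) (use assms integrable in \<open>auto intro!: mono_onD[OF mono]\<close>)
  then show "integral {a..b} g \<le> (b - a) * g b" using assms by simp
qed

lemma GG_diff: "0 \<le> a \<Longrightarrow> a \<le> b \<Longrightarrow> GG g b - GG g a = integral {a..b} g"
  unfolding GG_def using Henstock_Kurzweil_Integration.integral_combine[where a=0 and c=a and b=b and f=g] integrable[of 0 b] by auto

lemma GG_convex: assumes "0 \<le> x" "0 \<le> y" shows "g x * (y - x) \<le> GG g y - GG g x"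
proof (cases "x \<le> y")
  case True then show ?thesis using GG_diff[of x y] int_bounds[of x y] assms by (simp add: mult.commute)
next
  case False
  then have "GG g x - GG g y \<le> (x - y) * g x" using GG_diff[of y x] int_bounds[of y x] assms by simp
  then show ?thesis by (simp add: algebra_simps)
qed

lemma GG_nonneg: "0 \<le> x \<Longrightarrow> 0 \<le> GG g x"
  using int_bounds[of 0 x] nonneg[of 0] GG_def by (smt (verit) mult_nonneg_nonneg)

lemma GG_le: "0 \<le> x \<Longrightarrow> GG g x \<le> x * g x"
  using int_bounds[of 0 x] GG_def by simp

lemma GG_cont: "continuous_on {0..} (GG g)"
  unfolding continuous_on_def
proof (intro ballI)
  fix x :: real assume x: "x \<in> {0..}"
  have "continuous_on {0..x+1} (GG g)"
    unfolding GG_def by (rule indefinite_integral_continuous_1, rule integrable, simp)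
  then have "(GG g \<longlongrightarrow> GG g x) (at x within {0..x+1})"
    using x by (simp add: continuous_on_def)
  moreover have "at x within {0..x+1} = at x within {0..}"
    by (rule at_within_nhd[where S="{..<x+1}"]) auto
  ultimately show "(GG g \<longlongrightarrow> GG g x) (at x within {0..})" by simp
qed

lemma GG_riemann_aux:
  assumes x: "0 \<le> x" and K: "K > 0"
  shows "k \<le> K \<Longrightarrow> GG g (x * real k / real K) \<le> (\<Sum>j\<in>{1..k}. x / real K * g (x * real j / real K))
     \<and> (\<Sum>j\<in>{1..k}. x / real K * g (x * (real j - 1) / real K)) \<le> GG g (x * real k / real K)"
proof (induction k)
  case 0 then show ?case by (simp add: GG_def)
next
  case (Suc k)
  define a where "a = x * real k / real K"
  define b where "b = x * real (Suc k) / real K"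
  have a0: "0 \<le> a" using x K by (simp add: a_def)
  have ab: "a \<le> b" using x K by (simp add: a_def b_def divide_right_mono mult_left_mono)
  have ba: "b - a = x / real K" by (simp add: a_def b_def add_divide_distrib distrib_left)
  have d: "GG g b - GG g a = integral {a..b} g" using GG_diff a0 ab by blast
  have i1: "integral {a..b} g \<le> x / real K * g b" "x / real K * g a \<le> integral {a..b} g"
    using int_bounds[OF a0 ab] ba by auto
  have e: "x * (real (Suc k) - 1) / real K = a" by (simp add: a_def)
  have s1: "(\<Sum>j\<in>{1..Suc k}. x / real K * g (x * real j / real K)) = (\<Sum>j\<in>{1..k}. x / real K * g (x * real j / real K)) + x / real K * g b"
    by (simp add: b_def)
  have s2: "(\<Sum>j\<in>{1..Suc k}. x / real K * g (x * (real j - 1) / real K)) = (\<Sum>j\<in>{1..k}. x / real K * g (x * (real j - 1) / real K)) + x / real K * g a"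
    using e by simp
  from Suc have IH: "GG g a \<le> (\<Sum>j\<in>{1..k}. x / real K * g (x * real j / real K))"
     "(\<Sum>j\<in>{1..k}. x / real K * g (x * (real j - 1) / real K)) \<le> GG g a" by (auto simp: a_def)
  show ?case unfolding b_def[symmetric] s1 s2 using IH d i1 by linarith
qed

lemma GG_riemann:
  assumes x: "0 \<le> x" and K: "K > 0"
  shows "GG g x \<le> (\<Sum>j\<in>{1..K}. x / real K * g (x * real j / real K))"
    "(\<Sum>j\<in>{1..K}. x / real K * g (x * (real j - 1) / real K)) \<le> GG g x"
  using GG_riemann_aux[OF x K, of K] K by auto

end


locale rnet =
  fixes E :: "'e set" and I :: "'i set" and P :: "'i \<Rightarrow> 'e list set" and c :: "'e \<Rightarrow> real \<Rightarrow> real"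
  assumes finE: "finite E" and finI: "finite I"
    and finP: "\<And>i. i \<in> I \<Longrightarrow> finite (P i)" and neP: "\<And>i. i \<in> I \<Longrightarrow> P i \<noteq> {}"
    and subE: "\<And>i p. i \<in> I \<Longrightarrow> p \<in> P i \<Longrightarrow> set p \<subseteq> E"
    and disj: "\<And>i j. i \<in> I \<Longrightarrow> j \<in> I \<Longrightarrow> i \<noteq> j \<Longrightarrow> P i \<inter> P j = {}"
    and cf: "\<And>e. e \<in> E \<Longrightarrow> cost_fn (c e)"
begin

abbreviation "A \<equiv> all_paths I P"

lemma finA: "finite A" using finI finP by (auto simp: all_paths_def)

lemma sumA: "(\<Sum>p\<in>A. h p) = (\<Sum>i\<in>I. \<Sum>p\<in>P i. h p)"
  unfolding all_paths_def by (rule sum.UNION_disjoint) (use finI finP disj in auto)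

lemma A_iff: "p \<in> A \<longleftrightarrow> (\<exists>i\<in>I. p \<in> P i)" by (auto simp: all_paths_def)

lemma subA: "p \<in> A \<Longrightarrow> set p \<subseteq> E" using subE by (auto simp: A_iff)

lemma pair_unique: "i \<in> I \<Longrightarrow> j \<in> I \<Longrightarrow> p \<in> P i \<Longrightarrow> p \<in> P j \<Longrightarrow> i = j"
  using disj by blast

lemma feas_sum: "feasible_flow I P m f \<Longrightarrow> (\<Sum>p\<in>A. f p) = (\<Sum>i\<in>I. m i)"
  by (simp add: sumA feasible_flow_def)

lemma load_alt: "edge_load I P f e = (\<Sum>p\<in>A. if e \<in> set p then f p else 0)"
  unfolding edge_load_def by (rule sum.inter_filter[OF finA])

lemma load_nonneg: "feasible_flow I P m f \<Longrightarrow> 0 \<le> edge_load I P f e"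
  unfolding edge_load_def feasible_flow_def by (auto intro!: sum_nonneg)

lemma load_le: assumes "feasible_flow I P m f" shows "edge_load I P f e \<le> (\<Sum>i\<in>I. m i)"
proof -
  have "edge_load I P f e \<le> (\<Sum>p\<in>A. f p)"
    unfolding edge_load_def using assms finA by (intro sum_mono2) (auto simp: feasible_flow_def)
  then show ?thesis using feas_sum[OF assms] by simp
qed

lemma path_le_load: assumes "feasible_flow I P m f" "p \<in> A" "e \<in> set p"
  shows "f p \<le> edge_load I P f e"
  unfolding edge_load_def using assms finA
  by (intro member_le_sum) (auto simp: feasible_flow_def)

lemma swap: "(\<Sum>e\<in>E. h e * edge_load I P f e) = (\<Sum>p\<in>A. f p * (\<Sum>e\<in>set p. h e))"
proof -
  have "(\<Sum>e\<in>E. h e * edge_load I P f e) = (\<Sum>e\<in>E. \<Sum>p\<in>A. if e \<in> set p then h e * f p else 0)"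
    unfolding load_alt by (simp add: sum_distrib_left if_distrib cong: if_cong)
  also have "\<dots> = (\<Sum>p\<in>A. \<Sum>e\<in>E. if e \<in> set p then h e * f p else 0)" by (rule sum.swap)
  also have "\<dots> = (\<Sum>p\<in>A. f p * (\<Sum>e\<in>set p. h e))"
  proof (rule sum.cong[OF refl])
    fix p assume "p \<in> A"
    then have "set p \<subseteq> E" by (rule subA)
    then have "(\<Sum>e\<in>E. if e \<in> set p then h e * f p else 0) = (\<Sum>e\<in>set p. h e * f p)"
    proof -
      have "{e\<in>E. e \<in> set p} = set p" using \<open>set p \<subseteq> E\<close> by auto
      then show ?thesis using sum.inter_filter[OF finE, of "\<lambda>e. h e * f p" "\<lambda>e. e \<in> set p"] by simp
    qed
    then show "(\<Sum>e\<in>E. if e \<in> set p then h e * f p else 0) = f p * (\<Sum>e\<in>set p. h e)"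
      by (simp add: sum_distrib_left mult.commute)
  qed
  finally show ?thesis .
qed

lemma flow_le_B: assumes "feasible_flow I P m f" "\<And>i. i \<in> I \<Longrightarrow> m i \<ge> 0" "q \<in> A"
  shows "f q \<le> (\<Sum>i\<in>I. m i)"
proof -
  have "f q \<le> (\<Sum>p\<in>A. f p)" using assms finA by (intro member_le_sum) (auto simp: feasible_flow_def)
  then show ?thesis using feas_sum[OF assms(1)] by simp
qed

lemma cost_nonneg: "feasible_flow I P m f \<Longrightarrow> p \<in> A \<Longrightarrow> 0 \<le> path_cost c I P f p"
  unfolding path_cost_def
proof (intro sum_nonneg)
  fix e assume "feasible_flow I P m f" "p \<in> A" "e \<in> set p"
  then show "0 \<le> c e (edge_load I P f e)"
    using subA load_nonneg cf cost_fn.nonneg by blast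
qed

end


lemma cont_neg_near0:
  fixes h :: "real \<Rightarrow> real"
  assumes "continuous_on {0..a} h" "0 < a" "h 0 < 0"
  shows "\<exists>\<epsilon>. 0 < \<epsilon> \<and> \<epsilon> \<le> a \<and> h \<epsilon> < 0"
proof -
  obtain d where d: "d > 0" "\<And>x'. x' \<in> {0..a} \<Longrightarrow> dist x' 0 < d \<Longrightarrow> dist (h x') (h 0) < - h 0"
    using assms unfolding continuous_on_iff by (metis atLeastAtMost_iff neg_0_less_iff_less order_refl less_imp_le)
  define \<epsilon> where "\<epsilon> = min a (d/2)"
  have "dist (h \<epsilon>) (h 0) < - h 0" using d assms by (intro d(2)) (auto simp: \<epsilon>_def dist_real_def)
  then have "h \<epsilon> < 0" by (simp add: dist_real_def)
  then show ?thesis using assms d by (intro exI[of _ \<epsilon>]) (auto simp: \<epsilon>_def)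
qed

context rnet begin

definition Phi :: "('e list \<Rightarrow> real) \<Rightarrow> real" where
  "Phi f = (\<Sum>e\<in>E. GG (c e) (edge_load I P f e))"

lemma load_cont: "continuous_on UNIV (\<lambda>f. edge_load I P f e)"
  unfolding edge_load_def by (intro continuous_intros continuous_on_product_coordinates)

lemma exists_wardrop:
  assumes mnn: "\<And>i. i \<in> I \<Longrightarrow> m i \<ge> 0"
  shows "\<exists>f. wardrop_eq c I P m f"
proof -
  define B where "B = (\<Sum>i\<in>I. m i)"
  define box where "box = PiE UNIV (\<lambda>p. if p \<in> A then {0..B} else {0::real})"
  define S where "S = box \<inter> (\<Inter>i\<in>I. {f. (\<Sum>p\<in>P i. f p) = m i})"
  have cbox: "compact box"
  proof -
    have "compactin (product_topology (\<lambda>_. euclidean) UNIV) box"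
      unfolding box_def compactin_PiE by auto
    then show ?thesis by (simp add: euclidean_product_topology)
  qed
  have clo: "closed (\<Inter>i\<in>I. {f::'e list \<Rightarrow> real. (\<Sum>p\<in>P i. f p) = m i})"
    by (intro closed_INT ballI closed_Collect_eq continuous_intros continuous_on_product_coordinates)
  have cS: "compact S" unfolding S_def using cbox clo by blast
  have S_feas: "feasible_flow I P m f" if "f \<in> S" for f
    using that unfolding S_def box_def feasible_flow_def by (auto simp: PiE_iff split: if_splits)
  have feas_S: "f \<in> S" if "feasible_flow I P m f" "\<And>p. p \<notin> A \<Longrightarrow> f p = 0" for f
  proof -
    have "f p \<in> (if p \<in> A then {0..B} else {0})" for p
      using that flow_le_B[OF that(1) mnn] unfolding B_def by (auto simp: feasible_flow_def)
    then show ?thesis using that(1) unfolding S_def box_def feasible_flow_def by auto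
  qed
  define pick where "pick i = (SOME p. p \<in> P i)" for i
  have pick: "i \<in> I \<Longrightarrow> pick i \<in> P i" for i using neP unfolding pick_def by (simp add: some_in_eq)
  define f1 where "f1 p = (\<Sum>i\<in>I. if p = pick i then m i else 0)" for p
  have f1_sum: "(\<Sum>p\<in>P j. f1 p) = m j" if j: "j \<in> I" for j
  proof -
    have "(\<Sum>p\<in>P j. f1 p) = (\<Sum>i\<in>I. \<Sum>p\<in>P j. if p = pick i then m i else 0)"
      unfolding f1_def by (rule sum.swap)
    also have "\<dots> = (\<Sum>i\<in>I. if i = j then m i else 0)"
    proof (rule sum.cong[OF refl])
      fix i assume i: "i \<in> I"
      show "(\<Sum>p\<in>P j. if p = pick i then m i else 0) = (if i = j then m i else 0)"
        using pick[OF i] pair_unique[OF i j] finP[OF j] by (auto simp: sum.delta')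
    qed
    also have "\<dots> = m j" using j finI by simp
    finally show ?thesis .
  qed
  have f1_feas: "feasible_flow I P m f1"
    unfolding feasible_flow_def using f1_sum mnn by (auto simp: f1_def intro!: sum_nonneg)
  have f1_out: "p \<notin> A \<Longrightarrow> f1 p = 0" for p
    unfolding f1_def using pick by (auto simp: A_iff intro!: sum.neutral) blast
  have Sne: "S \<noteq> {}" using feas_S[OF f1_feas f1_out] by auto
  have contPhi: "continuous_on S Phi"
    unfolding Phi_def
  proof (intro continuous_on_sum)
    fix e assume e: "e \<in> E"
    show "continuous_on S (\<lambda>f. GG (c e) (edge_load I P f e))"
      by (rule continuous_on_compose2[OF cost_fn.GG_cont[OF cf[OF e]] continuous_on_subset[OF load_cont]])
        (use S_feas load_nonneg in auto)
  qed
  obtain f0 where f0: "f0 \<in> S" "\<And>g. g \<in> S \<Longrightarrow> Phi f0 \<le> Phi g"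
    using continuous_attains_inf[OF cS Sne contPhi] by blast
  have f0feas: "feasible_flow I P m f0" using S_feas f0(1) .
  have f0out: "p \<notin> A \<Longrightarrow> f0 p = 0" for p using f0(1) unfolding S_def box_def by (auto simp: PiE_iff) (metis empty_iff singletonD)
  show ?thesis
  proof (rule exI[of _ f0], unfold wardrop_eq_def, intro conjI f0feas ballI impI, rule ccontr)
    fix i p p' assume i: "i \<in> I" and p: "p \<in> P i" and p': "p' \<in> P i" and pos: "0 < f0 p"
      and nle: "\<not> path_cost c I P f0 p \<le> path_cost c I P f0 p'"
    have pA: "p \<in> A" and p'A: "p' \<in> A" using i p p' by (auto simp: A_iff)
    have pp': "p \<noteq> p'" using nle by auto
    define x where "x e = edge_load I P f0 e" for e
    define \<delta> where "\<delta> e = (if e \<in> set p' then 1 else 0) - (if e \<in> set p then 1 else (0::real))" for e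
    define fe where "fe \<epsilon> q = f0 q + (if q = p' then \<epsilon> else 0) - (if q = p then \<epsilon> else 0)" for \<epsilon> q
    have load_fe: "edge_load I P (fe \<epsilon>) e = x e + \<delta> e * \<epsilon>" for \<epsilon> e
    proof -
      have "edge_load I P (fe \<epsilon>) e = edge_load I P f0 e + edge_load I P (\<lambda>q. if q = p' then \<epsilon> else 0) e
          - edge_load I P (\<lambda>q. if q = p then \<epsilon> else 0) e"
        unfolding edge_load_def fe_def by (simp add: sum.distrib sum_subtractf)
      also have "\<dots> = x e + \<delta> e * \<epsilon>"
        unfolding x_def edge_load_def \<delta>_def using finA pA p'A by (simp add: sum.delta algebra_simps)
      finally show ?thesis .
    qed
    define h where "h \<epsilon> = (\<Sum>e\<in>E. \<delta> e * c e (x e + \<delta> e * \<epsilon>))" for \<epsilon>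
    have xge: "e \<in> set p \<Longrightarrow> f0 p \<le> x e" for e unfolding x_def using path_le_load[OF f0feas pA] .
    have xnn: "0 \<le> x e" for e unfolding x_def using load_nonneg[OF f0feas] .
    have arg_nn: "0 \<le> x e + \<delta> e * \<epsilon>" if "0 \<le> \<epsilon>" "\<epsilon> \<le> f0 p" for e \<epsilon>
      using xge[of e] xnn[of e] that unfolding \<delta>_def by auto
    have hcont: "continuous_on {0..f0 p} h"
      unfolding h_def
    proof (intro continuous_on_sum continuous_on_mult continuous_on_const)
      fix e assume e: "e \<in> E"
      show "continuous_on {0..f0 p} (\<lambda>\<epsilon>. c e (x e + \<delta> e * \<epsilon>))"
        by (rule continuous_on_compose2[OF cost_fn.cont[OF cf[OF e]]]) (auto intro!: continuous_intros arg_nn)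
    qed
    have h0: "h 0 = path_cost c I P f0 p' - path_cost c I P f0 p"
    proof -
      have "h 0 = (\<Sum>e\<in>E. (if e \<in> set p' then c e (x e) else 0)) - (\<Sum>e\<in>E. (if e \<in> set p then c e (x e) else 0))"
        unfolding h_def \<delta>_def sum_subtractf[symmetric] by (intro sum.cong) auto
      also have "\<dots> = path_cost c I P f0 p' - path_cost c I P f0 p"
      proof -
        have "{e\<in>E. e \<in> set p} = set p" "{e\<in>E. e \<in> set p'} = set p'" using subA[OF pA] subA[OF p'A] by auto
        then show ?thesis unfolding path_cost_def x_def
          using sum.inter_filter[OF finE, of "\<lambda>e. c e (edge_load I P f0 e)" "\<lambda>e. e \<in> set p"]
            sum.inter_filter[OF finE, of "\<lambda>e. c e (edge_load I P f0 e)" "\<lambda>e. e \<in> set p'"] by simp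
      qed
      finally show ?thesis .
    qed
    obtain \<epsilon> where eps: "0 < \<epsilon>" "\<epsilon> \<le> f0 p" "h \<epsilon> < 0"
      using cont_neg_near0[OF hcont pos] h0 nle by auto
    have fe_feas: "feasible_flow I P m (fe \<epsilon>)"
      unfolding feasible_flow_def
    proof (intro conjI ballI)
      fix q assume "q \<in> A"
      then show "0 \<le> fe \<epsilon> q" using f0feas eps pp' unfolding fe_def feasible_flow_def by auto
    next
      fix j assume j: "j \<in> I"
      have "(\<Sum>q\<in>P j. fe \<epsilon> q) = (\<Sum>q\<in>P j. f0 q) + (\<Sum>q\<in>P j. if q = p' then \<epsilon> else 0) - (\<Sum>q\<in>P j. if q = p then \<epsilon> else 0)"
        unfolding fe_def by (simp add: sum.distrib sum_subtractf)
      also have "\<dots> = m j"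
      proof (cases "j = i")
        case True then show ?thesis using f0feas j p p' finP[OF j] by (simp add: feasible_flow_def)
      next
        case False
        then have "p \<notin> P j" "p' \<notin> P j" using pair_unique[OF i j] p p' by auto
        then show ?thesis using f0feas j finP[OF j] by (simp add: feasible_flow_def)
      qed
      finally show "(\<Sum>q\<in>P j. fe \<epsilon> q) = m j" .
    qed
    have fe_out: "q \<notin> A \<Longrightarrow> fe \<epsilon> q = 0" for q using f0out pA p'A unfolding fe_def by auto
    have "Phi (fe \<epsilon>) - Phi f0 = (\<Sum>e\<in>E. GG (c e) (x e + \<delta> e * \<epsilon>) - GG (c e) (x e))"
      unfolding Phi_def load_fe x_def by (simp add: sum_subtractf)
    also have "\<dots> \<le> (\<Sum>e\<in>E. c e (x e + \<delta> e * \<epsilon>) * (\<delta> e * \<epsilon>))"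
    proof (rule sum_mono)
      fix e assume e: "e \<in> E"
      have "c e (x e + \<delta> e * \<epsilon>) * (x e - (x e + \<delta> e * \<epsilon>)) \<le> GG (c e) (x e) - GG (c e) (x e + \<delta> e * \<epsilon>)"
        by (rule cost_fn.GG_convex[OF cf[OF e]]) (use arg_nn eps xnn in auto)
      then show "GG (c e) (x e + \<delta> e * \<epsilon>) - GG (c e) (x e) \<le> c e (x e + \<delta> e * \<epsilon>) * (\<delta> e * \<epsilon>)"
        by (simp add: algebra_simps)
    qed
    also have "\<dots> = \<epsilon> * h \<epsilon>" unfolding h_def by (simp add: sum_distrib_left algebra_simps)
    also have "\<dots> < 0" using eps by (simp add: mult_pos_neg)
    finally have "Phi (fe \<epsilon>) < Phi f0" by simp
    moreover have "Phi f0 \<le> Phi (fe \<epsilon>)" by (rule f0(2)[OF feas_S[OF fe_feas fe_out]])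
    ultimately show False by simp
  qed
qed

end


context rnet begin

lemma VI:
  assumes w: "wardrop_eq c I P m f" and mnn: "\<And>i. i \<in> I \<Longrightarrow> m i \<ge> 0"
    and y: "feasible_flow I P m y"
    and good: "\<And>i. i \<in> I \<Longrightarrow> \<exists>q\<in>P i. path_cost c I P f q \<le> D" and Ine: "I \<noteq> {}"
  shows "\<And>e. e \<in> E \<Longrightarrow> 0 < edge_load I P f e \<Longrightarrow> c e (edge_load I P f e) \<le> D"
    and "0 \<le> D"
    and "0 \<le> (\<Sum>e\<in>E. min (c e (edge_load I P f e)) D * (edge_load I P y e - edge_load I P f e))"
proof -
  have ff: "feasible_flow I P m f" using w by (simp add: wardrop_eq_def)
  have used: "path_cost c I P f p \<le> D" if pp: "p \<in> A" "0 < f p" for p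
  proof -
    obtain i where i: "i \<in> I" "p \<in> P i" using pp by (auto simp: A_iff)
    obtain q where q: "q \<in> P i" "path_cost c I P f q \<le> D" using good[OF i(1)] by blast
    have "path_cost c I P f p \<le> path_cost c I P f q" using w i q pp unfolding wardrop_eq_def by blast
    then show ?thesis using q by simp
  qed
  show edge: "c e (edge_load I P f e) \<le> D" if e: "e \<in> E" "0 < edge_load I P f e" for e
  proof -
    obtain p where p: "p \<in> A" "e \<in> set p" "0 < f p"
    proof -
      have "\<exists>p\<in>{p \<in> A. e \<in> set p}. 0 < f p"
      proof (rule ccontr)
        assume "\<not> ?thesis"
        then have "edge_load I P f e \<le> 0" unfolding edge_load_def by (auto intro!: sum_nonpos)
        then show False using e by simp
      qed
      then show ?thesis using that by auto
    qed
    have "c e (edge_load I P f e) \<le> path_cost c I P f p"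
      unfolding path_cost_def using p subA[OF p(1)]
      by (intro member_le_sum) (auto intro!: cost_fn.nonneg[OF cf] load_nonneg[OF ff])
    then show ?thesis using used[OF p(1,3)] by simp
  qed
  obtain i0 where i0: "i0 \<in> I" using Ine by blast
  show D0: "0 \<le> D"
  proof -
    obtain q where q: "q \<in> P i0" "path_cost c I P f q \<le> D" using good[OF i0] by blast
    have "q \<in> A" using q i0 by (auto simp: A_iff)
    then show ?thesis using cost_nonneg[OF ff] q by force
  qed
  define ch where "ch e = min (c e (edge_load I P f e)) D" for e
  define W where "W p = (\<Sum>e\<in>set p. ch e)" for p
  have chnn: "0 \<le> ch e" if "e \<in> E" for e
    unfolding ch_def using D0 cost_fn.nonneg[OF cf[OF that] load_nonneg[OF ff]] by simp
  have W_ge: "min (path_cost c I P f p) D \<le> W p" if p: "p \<in> A" for p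
  proof (cases "\<exists>e\<in>set p. D \<le> c e (edge_load I P f e)")
    case True
    then obtain e where e: "e \<in> set p" "D \<le> c e (edge_load I P f e)" by blast
    have "ch e \<le> W p" unfolding W_def using e subA[OF p] chnn by (intro member_le_sum) auto
    then show ?thesis using e unfolding ch_def by simp
  next
    case False
    then have "W p = path_cost c I P f p" unfolding W_def path_cost_def ch_def
      by (intro sum.cong) auto
    then show ?thesis by simp
  qed
  have W_used: "W p = path_cost c I P f p" if p: "p \<in> A" "0 < f p" for p
    unfolding W_def path_cost_def ch_def
  proof (intro sum.cong refl)
    fix e assume e: "e \<in> set p"
    have "0 < edge_load I P f e" using path_le_load[OF ff p(1) e] p by simp
    then show "min (c e (edge_load I P f e)) D = c e (edge_load I P f e)" using edge[of e] subA[OF p(1)] e by auto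
  qed
  have pair: "(\<Sum>p\<in>P i. f p * W p) \<le> (\<Sum>p\<in>P i. y p * W p)" if i: "i \<in> I" for i
  proof (cases "\<exists>p\<in>P i. 0 < f p")
    case False
    then have "f p = 0" if "p \<in> P i" for p
    proof -
      have "p \<in> A" using i that by (auto simp: A_iff)
      then show ?thesis using ff False that unfolding feasible_flow_def by force
    qed
    then have "(\<Sum>p\<in>P i. f p * W p) = 0" by simp
    also have "\<dots> \<le> (\<Sum>p\<in>P i. y p * W p)"
    proof (intro sum_nonneg mult_nonneg_nonneg)
      fix p assume "p \<in> P i"
      then have pA: "p \<in> A" using i by (auto simp: A_iff)
      show "0 \<le> y p" using y pA by (simp add: feasible_flow_def)
      show "0 \<le> W p" unfolding W_def using chnn subA[OF pA] by (auto intro!: sum_nonneg)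
    qed
    finally show ?thesis .
  next
    case True
    then obtain p0 where p0: "p0 \<in> P i" "0 < f p0" by blast
    define d where "d = path_cost c I P f p0"
    have "p0 \<in> A" using p0 i by (auto simp: A_iff)
    have dD: "d \<le> D" using used[OF \<open>p0 \<in> A\<close> p0(2)] d_def by simp
    have dle: "d \<le> path_cost c I P f p" if "p \<in> P i" for p
      using w i p0 that unfolding wardrop_eq_def d_def by blast
    have "(\<Sum>p\<in>P i. f p * W p) = (\<Sum>p\<in>P i. f p * d)"
    proof (intro sum.cong refl)
      fix p assume p: "p \<in> P i"
      then have pA: "p \<in> A" using i by (auto simp: A_iff)
      show "f p * W p = f p * d"
      proof (cases "0 < f p")
        case True
        have "path_cost c I P f p \<le> d" using w i p0 p True unfolding wardrop_eq_def d_def by blast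
        then show ?thesis using W_used[OF pA True] dle[OF p] by simp
      qed (use ff pA in \<open>auto simp: feasible_flow_def\<close>)
    qed
    also have "\<dots> = m i * d" using ff i by (simp add: feasible_flow_def sum_distrib_right[symmetric])
    also have "\<dots> = (\<Sum>p\<in>P i. y p * d)" using y i by (simp add: feasible_flow_def sum_distrib_right[symmetric])
    also have "\<dots> \<le> (\<Sum>p\<in>P i. y p * W p)"
    proof (intro sum_mono mult_left_mono)
      fix p assume p: "p \<in> P i"
      then have pA: "p \<in> A" using i by (auto simp: A_iff)
      show "0 \<le> y p" using y pA by (simp add: feasible_flow_def)
      show "d \<le> W p" using W_ge[OF pA] dle[OF p] dD by linarith
    qed
    finally show ?thesis .
  qed
  have "(\<Sum>e\<in>E. ch e * edge_load I P f e) \<le> (\<Sum>e\<in>E. ch e * edge_load I P y e)"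
    unfolding swap W_def[symmetric] sumA by (rule sum_mono) (rule pair)
  then show "0 \<le> (\<Sum>e\<in>E. min (c e (edge_load I P f e)) D * (edge_load I P y e - edge_load I P f e))"
    unfolding ch_def[symmetric] by (simp add: right_diff_distrib sum_subtractf)
qed

end


context cost_fn begin

lemma small_bounds:
  assumes x: "0 \<le> x" "x \<le> B" and gB: "B * g B \<le> err" and ln: "0 \<le> lh" "lh \<le> 1" and un: "0 \<le> uh"
  shows "lh * (x * g x) \<le> GG g x + err" "GG g x \<le> uh * (x * g x) + err"
proof -
  have gx: "0 \<le> g x" using nonneg x by simp
  have "g x \<le> g B" using x mono by (auto intro: mono_onD)
  then have "x * g x \<le> B * g B" using x gx by (intro mult_mono) auto
  then have xe: "x * g x \<le> err" using gB by simp
  have "0 \<le> x * g x" using x gx by simp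
  then have "lh * (x * g x) \<le> x * g x" using ln by (simp add: mult_left_le_one_le)
  then show "lh * (x * g x) \<le> GG g x + err" using GG_nonneg[OF x(1)] xe by linarith
  show "GG g x \<le> uh * (x * g x) + err" using GG_le[OF x(1)] xe un \<open>0 \<le> x * g x\<close>
    by (smt (verit) mult_nonneg_nonneg)
qed

lemma tight_bounds:
  fixes K :: nat
  assumes K: "0 < K" and x: "0 \<le> x" "x \<le> M" and eps: "0 < \<epsilon>" and eps1: "\<epsilon> \<le> 1" and eta: "0 \<le> \<eta>"
    and ACm: "0 \<le> Aa * Cm"
    and hyp: "\<And>z k. \<epsilon> * M \<le> z \<Longrightarrow> z \<le> M \<Longrightarrow> k \<in> {1..K} \<Longrightarrow> \<bar>g (z * real k / real K) - Lv k * g z\<bar> \<le> \<eta> * g z"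
    and gM: "g M \<le> Aa * Cm" and Lv0: "Lv 0 = 0"
    and U: "U = (\<Sum>k\<in>{1..K}. Lv k) / real K" and l: "l = (\<Sum>k\<in>{1..K}. Lv (k - 1)) / real K"
    and ln: "0 \<le> l - \<eta>" "l - \<eta> \<le> 1" and un: "0 \<le> U + \<eta>"
  shows "(l - \<eta>) * (x * g x) \<le> GG g x + \<epsilon> * M * (Aa * Cm)" "GG g x \<le> (U + \<eta>) * (x * g x) + \<epsilon> * M * (Aa * Cm)"
proof -
  have gx: "0 \<le> g x" using nonneg x by simp
  have eM_nonneg: "0 \<le> \<epsilon> * M * (Aa * Cm)" using eps x ACm by simp
  have "(l - \<eta>) * (x * g x) \<le> GG g x \<and> GG g x \<le> (U + \<eta>) * (x * g x)" if big: "\<epsilon> * M \<le> x"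
  proof
    have "GG g x \<le> (\<Sum>j\<in>{1..K}. x / real K * g (x * real j / real K))" by (rule GG_riemann(1)[OF x(1) K])
    also have "\<dots> \<le> (\<Sum>j\<in>{1..K}. x / real K * ((Lv j + \<eta>) * g x))"
    proof (intro sum_mono mult_left_mono)
      fix j assume j: "j \<in> {1..K}"
      show "g (x * real j / real K) \<le> (Lv j + \<eta>) * g x" using hyp[OF big x(2) j] by (simp add: algebra_simps abs_le_iff)
    qed (use x in auto)
    also have "\<dots> = (\<Sum>j\<in>{1..K}. (x * g x / real K) * Lv j + (x * g x / real K) * \<eta>)"
      by (rule sum.cong) (auto simp: algebra_simps)
    also have "\<dots> = (x * g x / real K) * (\<Sum>j\<in>{1..K}. Lv j) + real K * ((x * g x / real K) * \<eta>)"
      by (simp add: sum.distrib sum_distrib_left)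
    also have "\<dots> = (U + \<eta>) * (x * g x)"
      unfolding U using K by (simp add: field_simps)
    finally show "GG g x \<le> (U + \<eta>) * (x * g x)" .
  next
    have "(l - \<eta>) * (x * g x) = (x * g x / real K) * (\<Sum>j\<in>{1..K}. Lv (j - 1)) - real K * ((x * g x / real K) * \<eta>)"
      unfolding l using K by (simp add: field_simps)
    also have "\<dots> = (\<Sum>j\<in>{1..K}. (x * g x / real K) * Lv (j - 1) - (x * g x / real K) * \<eta>)"
      by (simp add: sum_subtractf sum_distrib_left)
    also have "\<dots> = (\<Sum>j\<in>{1..K}. x / real K * ((Lv (j - 1) - \<eta>) * g x))"
      by (rule sum.cong) (auto simp: algebra_simps)
    also have "\<dots> \<le> (\<Sum>j\<in>{1..K}. x / real K * g (x * (real j - 1) / real K))"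
    proof (intro sum_mono mult_left_mono)
      fix j assume j: "j \<in> {1..K}"
      show "(Lv (j - 1) - \<eta>) * g x \<le> g (x * (real j - 1) / real K)"
      proof (cases "j = 1")
        case True
        have "0 \<le> g 0" using nonneg by simp
        moreover have "0 \<le> \<eta> * g x" using eta gx by simp
        ultimately show ?thesis using True Lv0 by simp
      next
        case False
        then have j1: "j - 1 \<in> {1..K}" and rj: "real j - 1 = real (j - 1)" using j by auto
        show ?thesis using hyp[OF big x(2) j1] unfolding rj by (simp add: algebra_simps abs_le_iff)
      qed
    qed (use x in auto)
    also have "\<dots> \<le> GG g x" by (rule GG_riemann(2)[OF x(1) K])
    finally show "(l - \<eta>) * (x * g x) \<le> GG g x" .
  qed
  moreover have "(l - \<eta>) * (x * g x) \<le> GG g x + \<epsilon> * M * (Aa * Cm) \<and> GG g x \<le> (U + \<eta>) * (x * g x) + \<epsilon> * M * (Aa * Cm)"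
    if small: "x < \<epsilon> * M"
  proof -
    have eM: "0 \<le> \<epsilon> * M" using x small by simp
    have eM1: "\<epsilon> * M \<le> M" using eps1 x eM mult_left_le_one_le[of M \<epsilon>] eps by simp
    have "g (\<epsilon> * M) \<le> g M" using eM eM1 by (auto intro: mono_onD[OF mono])
    then have "\<epsilon> * M * g (\<epsilon> * M) \<le> \<epsilon> * M * (Aa * Cm)" using gM eM by (intro mult_left_mono) auto
    from small_bounds[OF x(1) _ this ln un] small show ?thesis by auto
  qed
  ultimately show "(l - \<eta>) * (x * g x) \<le> GG g x + \<epsilon> * M * (Aa * Cm)" "GG g x \<le> (U + \<eta>) * (x * g x) + \<epsilon> * M * (Aa * Cm)"
    using GG_nonneg[OF x(1)] eM_nonneg by (smt (verit))+
qed

end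



context rnet begin

lemma det_main:
  fixes K :: nat
  assumes w: "wardrop_eq c I P m f" and mnn: "\<And>i. i \<in> I \<Longrightarrow> m i \<ge> 0" and Ine: "I \<noteq> {}"
    and y: "feasible_flow I P m y"
    and Mdef: "M = (\<Sum>i\<in>I. m i)"
    and Ei: "Ei \<subseteq> E" and T: "T \<subseteq> E - Ei"
    and good: "\<And>i. i \<in> I \<Longrightarrow> \<exists>q\<in>P i. set q \<inter> Ei = {}"
    and Ddef: "D = (\<Sum>e\<in>E - Ei. c e M)"
    and eps: "0 < \<epsilon>" "\<epsilon> \<le> 1" and eta: "0 \<le> \<eta>" and K: "0 < K"
    and ACm: "0 \<le> Aa * Cm" and Cm: "0 \<le> Cm"
    and hA: "\<And>e. e \<in> T \<Longrightarrow> c e M \<le> Aa * Cm"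
    and hZ: "\<And>e. e \<in> E - Ei - T \<Longrightarrow> c e M \<le> \<eta> * Cm"
    and hI: "\<And>e. e \<in> Ei \<Longrightarrow> D < c e (\<epsilon> * M) \<and> real (card E) * D * M < \<epsilon> * M * c e (\<epsilon> * M)"
    and hT: "\<And>e z k. e \<in> T \<Longrightarrow> \<epsilon> * M \<le> z \<Longrightarrow> z \<le> M \<Longrightarrow> k \<in> {1..K} \<Longrightarrow>
               \<bar>c e (z * real k / real K) - Lv k * c e z\<bar> \<le> \<eta> * c e z"
    and Lv0: "Lv 0 = 0"
    and U: "U = (\<Sum>k\<in>{1..K}. Lv k) / real K" and l: "l = (\<Sum>k\<in>{1..K}. Lv (k - 1)) / real K"
    and ln: "0 \<le> l - \<eta>" "l - \<eta> \<le> 1" and un: "0 \<le> U + \<eta>"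
    and Ly: "social_cost E c (edge_load I P y) \<le> real (card E) * D * M"
  shows "(l - \<eta>) * social_cost E c (edge_load I P f)
     \<le> (U + \<eta>) * social_cost E c (edge_load I P y) + 2 * real (card E) * (\<epsilon> * M * (Aa * Cm) + \<eta> * M * Cm + \<epsilon> * M * D)"
proof -
  have ff: "feasible_flow I P m f" using w by (simp add: wardrop_eq_def)
  define x where "x e = edge_load I P f e" for e
  define yv where "yv e = edge_load I P y e" for e
  have x0: "0 \<le> x e" "x e \<le> M" for e unfolding x_def Mdef using load_nonneg[OF ff] load_le[OF ff] by auto
  have y0: "0 \<le> yv e" "yv e \<le> M" for e unfolding yv_def Mdef using load_nonneg[OF y] load_le[OF y] by auto
  have M0: "0 \<le> M" using x0[of undefined] by simp
  have eM0: "0 \<le> \<epsilon> * M" using eps M0 by simp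
  note x0y0[simp] = x0(1) y0(1) M0 eM0
  have good': "\<exists>q\<in>P i. path_cost c I P f q \<le> D" if i: "i \<in> I" for i
  proof -
    obtain q where q: "q \<in> P i" "set q \<inter> Ei = {}" using good[OF i] by blast
    have qE: "set q \<subseteq> E - Ei" using subE[OF i q(1)] q(2) by auto
    have "path_cost c I P f q \<le> (\<Sum>e\<in>set q. c e M)"
      unfolding path_cost_def
    proof (rule sum_mono)
      fix e assume "e \<in> set q"
      then have e: "e \<in> E" using qE by auto
      show "c e (edge_load I P f e) \<le> c e M"
        using x0[of e] unfolding x_def by (intro mono_onD[OF cost_fn.mono[OF cf[OF e]]]) auto
    qed
    also have "\<dots> \<le> D" unfolding Ddef using qE finE M0
      by (intro sum_mono2) (auto intro!: cost_fn.nonneg[OF cf])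
    finally show ?thesis using q by blast
  qed
  note vi = VI[OF w mnn y good' Ine]
  have D0: "0 \<le> D" by (rule vi(2))
  have edgeD: "e \<in> E \<Longrightarrow> 0 < x e \<Longrightarrow> c e (x e) \<le> D" for e using vi(1) unfolding x_def by blast
  define ch where "ch e = min (c e (x e)) D" for e
  have vi3: "0 \<le> (\<Sum>e\<in>E. ch e * (yv e - x e))" using vi(3) unfolding ch_def x_def yv_def .
  define err0 where "err0 = \<epsilon> * M * (Aa * Cm) + \<eta> * M * Cm"
  have err0nn: "0 \<le> \<epsilon> * M * (Aa * Cm)" "0 \<le> \<eta> * M * Cm" using eps M0 ACm eta Cm by auto
  have cnn: "e \<in> E \<Longrightarrow> 0 \<le> z \<Longrightarrow> 0 \<le> c e z" for e z using cost_fn.nonneg[OF cf] by blast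
  have B12: "(l - \<eta>) * (x e * c e (x e)) \<le> GG (c e) (x e) + err0 \<and> GG (c e) (yv e) \<le> (U + \<eta>) * (yv e * c e (yv e)) + err0"
    if e: "e \<in> E - Ei" for e
  proof (cases "e \<in> T")
    case True
    have cfe: "cost_fn (c e)" using e cf by auto
    have hyp: "\<And>z k. \<epsilon> * M \<le> z \<Longrightarrow> z \<le> M \<Longrightarrow> k \<in> {1..K} \<Longrightarrow>
               \<bar>c e (z * real k / real K) - Lv k * c e z\<bar> \<le> \<eta> * c e z" using hT True by blast
    have t1: "(l - \<eta>) * (x e * c e (x e)) \<le> GG (c e) (x e) + \<epsilon> * M * (Aa * Cm)"
      by (rule cost_fn.tight_bounds(1)[where Lv=Lv and U=U and l=l and K=K and M=M]; (fact | rule x0 hA[OF True] U l)?)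
    have t2: "GG (c e) (yv e) \<le> (U + \<eta>) * (yv e * c e (yv e)) + \<epsilon> * M * (Aa * Cm)"
      by (rule cost_fn.tight_bounds(2)[where Lv=Lv and U=U and l=l and K=K and M=M]; (fact | rule y0 hA[OF True] U l)?)
    show ?thesis using t1 t2 err0nn unfolding err0_def by linarith
  next
    case False
    have cfe: "cost_fn (c e)" using e cf by auto
    have "M * c e M \<le> M * (\<eta> * Cm)" using hZ[of e] e False M0 by (intro mult_left_mono) auto
    then have "M * c e M \<le> \<eta> * M * Cm" by (simp add: algebra_simps)
    note sb = cost_fn.small_bounds[OF cfe _ _ this ln un]
    show ?thesis using sb[OF x0[of e]] sb[OF y0[of e]] err0nn unfolding err0_def by linarith
  qed
  have B3: "ch e * (yv e - x e) \<le> GG (c e) (yv e) - GG (c e) (x e)" if e: "e \<in> E - Ei" for e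
  proof -
    have cfe: "cost_fn (c e)" using e cf by auto
    have "ch e * (yv e - x e) \<le> c e (x e) * (yv e - x e)"
    proof (cases "0 < x e")
      case True then show ?thesis using edgeD[of e] e unfolding ch_def by auto
    next
      case False
      then have "0 \<le> yv e - x e" using x0[of e] y0[of e] by auto
      then show ?thesis unfolding ch_def by (intro mult_right_mono) auto
    qed
    also have "\<dots> \<le> GG (c e) (yv e) - GG (c e) (x e)" by (rule cost_fn.GG_convex[OF cfe x0(1) y0(1)])
    finally show ?thesis .
  qed
  have I1: "x e * c e (x e) \<le> \<epsilon> * M * D" if e: "e \<in> Ei" for e
  proof (cases "0 < x e")
    case True
    have eE: "e \<in> E" using e Ei by auto
    have cD: "c e (x e) \<le> D" using edgeD[OF eE True] .
    have "x e < \<epsilon> * M"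
    proof (rule ccontr)
      assume "\<not> x e < \<epsilon> * M"
      then have "c e (\<epsilon> * M) \<le> c e (x e)" using eps M0 x0[of e]
        by (intro mono_onD[OF cost_fn.mono[OF cf[OF eE]]]) auto
      then show False using hI[OF e] cD by simp
    qed
    then show ?thesis using cD x0[of e] cnn[OF eE x0(1)] by (intro mult_mono) auto
  next
    case False
    then have "x e = 0" using x0[of e] by simp
    then show ?thesis using eps M0 D0 by simp
  qed
  have I2: "ch e * (yv e - x e) \<le> \<epsilon> * M * D" if e: "e \<in> Ei" for e
  proof -
    have eE: "e \<in> E" using e Ei by auto
    have ch0: "0 \<le> ch e" "ch e \<le> D" unfolding ch_def using D0 cnn[OF eE x0(1)] by auto
    have "yv e < \<epsilon> * M"
    proof (rule ccontr)
      assume "\<not> yv e < \<epsilon> * M"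
      then have ge: "\<epsilon> * M \<le> yv e" by simp
      then have "c e (\<epsilon> * M) \<le> c e (yv e)" using eps M0 y0[of e]
        by (intro mono_onD[OF cost_fn.mono[OF cf[OF eE]]]) auto
      then have "\<epsilon> * M * c e (\<epsilon> * M) \<le> yv e * c e (yv e)"
        using ge eps M0 cnn[OF eE, of "\<epsilon> * M"] by (intro mult_mono) auto
      also have "\<dots> \<le> social_cost E c (edge_load I P y)"
        unfolding social_cost_def yv_def using eE finE
        by (intro member_le_sum) (auto intro!: mult_nonneg_nonneg load_nonneg[OF y] cnn)
      finally show False using hI[OF e] Ly by simp
    qed
    have "ch e * (yv e - x e) \<le> ch e * yv e" using ch0 x0[of e] by (simp add: mult_left_mono)
    also have "\<dots> \<le> D * (\<epsilon> * M)" using ch0 y0[of e] \<open>yv e < \<epsilon> * M\<close> by (intro mult_mono) auto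
    finally show ?thesis by (simp add: mult.commute mult.left_commute)
  qed
  have split: "(\<Sum>e\<in>E. h e) = (\<Sum>e\<in>E - Ei. h e) + (\<Sum>e\<in>Ei. h e)" for h :: "'e \<Rightarrow> real"
    using sum.subset_diff[OF Ei finE] .
  have cardEi: "real (card Ei) \<le> real (card E)" "real (card (E - Ei)) \<le> real (card E)"
    using card_mono[OF finE Ei] card_mono[OF finE, of "E - Ei"] by auto
  have eMD: "0 \<le> \<epsilon> * M * D" using eps M0 D0 by simp
  have s1: "(\<Sum>e\<in>Ei. ch e * (yv e - x e)) \<le> real (card E) * (\<epsilon> * M * D)"
    using sum_bounded_above[of Ei "\<lambda>e. ch e * (yv e - x e)" "\<epsilon> * M * D"] I2 cardEi eMD
    by (smt (verit) mult_right_mono)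
  have s2: "(\<Sum>e\<in>Ei. x e * c e (x e)) \<le> real (card E) * (\<epsilon> * M * D)"
    using sum_bounded_above[of Ei "\<lambda>e. x e * c e (x e)" "\<epsilon> * M * D"] I1 cardEi eMD
    by (smt (verit) mult_right_mono)
  have errnn: "0 \<le> err0" using err0nn unfolding err0_def by simp
  have s3: "(\<Sum>e\<in>E - Ei. (l - \<eta>) * (x e * c e (x e))) \<le> (\<Sum>e\<in>E - Ei. GG (c e) (x e)) + real (card E) * err0"
  proof -
    have "(\<Sum>e\<in>E - Ei. (l - \<eta>) * (x e * c e (x e))) \<le> (\<Sum>e\<in>E - Ei. GG (c e) (x e) + err0)"
      using B12 by (intro sum_mono) auto
    also have "\<dots> \<le> (\<Sum>e\<in>E - Ei. GG (c e) (x e)) + real (card E) * err0"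
      using cardEi errnn by (simp add: sum.distrib mult_right_mono)
    finally show ?thesis .
  qed
  have s4: "(\<Sum>e\<in>E - Ei. GG (c e) (yv e)) \<le> (U + \<eta>) * (\<Sum>e\<in>E - Ei. yv e * c e (yv e)) + real (card E) * err0"
  proof -
    have "(\<Sum>e\<in>E - Ei. GG (c e) (yv e)) \<le> (\<Sum>e\<in>E - Ei. (U + \<eta>) * (yv e * c e (yv e)) + err0)"
      using B12 by (intro sum_mono) auto
    also have "\<dots> \<le> (U + \<eta>) * (\<Sum>e\<in>E - Ei. yv e * c e (yv e)) + real (card E) * err0"
      using cardEi errnn by (simp add: sum.distrib sum_distrib_left mult_right_mono)
    finally show ?thesis .
  qed
  have s5: "(\<Sum>e\<in>E - Ei. yv e * c e (yv e)) \<le> social_cost E c (edge_load I P y)"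
    unfolding social_cost_def yv_def[symmetric] split[of "\<lambda>e. yv e * c e (yv e)"]
    using Ei y0 cnn by (smt (verit) subsetD sum_nonneg mult_nonneg_nonneg)
  have s6: "(\<Sum>e\<in>E - Ei. GG (c e) (x e)) \<le> (\<Sum>e\<in>E - Ei. GG (c e) (yv e)) + real (card E) * (\<epsilon> * M * D)"
  proof -
    have "0 \<le> (\<Sum>e\<in>E - Ei. ch e * (yv e - x e)) + (\<Sum>e\<in>Ei. ch e * (yv e - x e))"
      using vi3 split by simp
    moreover have "(\<Sum>e\<in>E - Ei. ch e * (yv e - x e)) \<le> (\<Sum>e\<in>E - Ei. GG (c e) (yv e) - GG (c e) (x e))"
      using B3 by (intro sum_mono) auto
    ultimately show ?thesis using s1 by (simp add: sum_subtractf)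
  qed
  have lx: "(l - \<eta>) * (\<Sum>e\<in>Ei. x e * c e (x e)) \<le> (\<Sum>e\<in>Ei. x e * c e (x e))"
    using ln Ei x0 cnn by (intro mult_left_le_one_le sum_nonneg mult_nonneg_nonneg) auto
  have "(l - \<eta>) * social_cost E c (edge_load I P f)
      = (\<Sum>e\<in>E - Ei. (l - \<eta>) * (x e * c e (x e))) + (l - \<eta>) * (\<Sum>e\<in>Ei. x e * c e (x e))"
    unfolding social_cost_def x_def[symmetric] split[of "\<lambda>e. x e * c e (x e)"] by (simp add: sum_distrib_left distrib_left)
  also have "\<dots> \<le> (U + \<eta>) * social_cost E c (edge_load I P y) + 2 * real (card E) * (err0 + \<epsilon> * M * D)"
    using s2 s3 s4 s5 s6 lx un mult_left_mono[OF s5 un] by (simp add: algebra_simps)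
  finally show ?thesis unfolding err0_def by simp
qed

end


lemma F_nontriv: "F = at_top \<or> F = (at_right 0 :: real filter) \<Longrightarrow> F \<noteq> bot"
  using trivial_limit_at_right_real[of "0::real"] trivial_limit_at_top_linorder by (auto simp: trivial_limit_def)

lemma F_pos: "F = at_top \<or> F = (at_right 0 :: real filter) \<Longrightarrow> eventually (\<lambda>t. 0 < t) F"
  by (auto simp: eventually_at_top_linorder eventually_at_right_field intro!: exI[of _ 1])

lemma F_scale:
  assumes "F = at_top \<or> F = (at_right 0 :: real filter)" "0 < \<kappa>"
  shows "filterlim (\<lambda>t. t * \<kappa>) F F"
  using assms(1)
proof
  assume F: "F = at_top"
  show ?thesis unfolding F by (rule filterlim_at_top_mult_tendsto_pos[OF tendsto_const assms(2) filterlim_ident])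
next
  assume F: "F = at_right 0"
  have "((\<lambda>t. t * \<kappa>) \<longlongrightarrow> 0 * \<kappa>) (at_right (0::real))" by (intro tendsto_intros)
  moreover have "eventually (\<lambda>t. t * \<kappa> \<in> {0<..} \<and> t * \<kappa> \<noteq> 0) (at_right (0::real))"
    using assms(2) by (auto simp: eventually_at_right_field intro: exI[of _ 1])
  ultimately show ?thesis unfolding F filterlim_at by simp
qed

lemma F_trans:
  assumes F: "F = at_top \<or> F = (at_right 0 :: real filter)" and ev: "eventually Q F"
    and M: "filterlim M F sequentially" and eps: "0 < \<epsilon>"
  shows "eventually (\<lambda>n. \<forall>z. \<epsilon> * M n \<le> z \<longrightarrow> z \<le> M n \<longrightarrow> Q z) sequentially"
  using F
proof
  assume F: "F = at_top"
  obtain T where T: "\<And>z. z \<ge> T \<Longrightarrow> Q z" using ev unfolding F eventually_at_top_linorder by blast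
  have "eventually (\<lambda>n. M n \<ge> T / \<epsilon>) sequentially"
    using M unfolding F filterlim_at_top by blast
  then show ?thesis
  proof (rule eventually_mono)
    fix n assume "T / \<epsilon> \<le> M n"
    then have "T \<le> \<epsilon> * M n" using eps by (simp add: field_simps)
    then show "\<forall>z. \<epsilon> * M n \<le> z \<longrightarrow> z \<le> M n \<longrightarrow> Q z" using T by auto
  qed
next
  assume F: "F = at_right 0"
  obtain b where b: "b > 0" "\<And>z. z > 0 \<Longrightarrow> z < b \<Longrightarrow> Q z" using ev unfolding F eventually_at_right_field by blast
  have "eventually (\<lambda>n. M n \<in> {0<..<b}) sequentially"
  proof -
    have "eventually (\<lambda>t. t \<in> {0<..<b}) (at_right (0::real))" using b(1)
      by (auto simp: eventually_at_right_field intro: exI[of _ b])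
    then show ?thesis using M unfolding F by (rule eventually_compose_filterlim)
  qed
  then show ?thesis
  proof (rule eventually_mono)
    fix n assume "M n \<in> {0<..<b}"
    then have "0 < \<epsilon> * M n" using eps by simp
    then show "\<forall>z. \<epsilon> * M n \<le> z \<longrightarrow> z \<le> M n \<longrightarrow> Q z" using b \<open>M n \<in> _\<close> by auto
  qed
qed



locale rv =
  fixes F :: "real filter" and cb :: "real \<Rightarrow> real"
  assumes omega: "F = at_top \<or> F = at_right 0" and rvar: "regularly_varying F cb"
begin

definition Lf :: "real \<Rightarrow> real" where "Lf r = Lim F (\<lambda>t. cb (t * r) / cb t)"

lemma Fnt: "F \<noteq> bot" using F_nontriv[OF omega] .
lemma Fpos: "eventually (\<lambda>t. 0 < t) F" using F_pos[OF omega] .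
lemma cbpos: "eventually (\<lambda>t. 0 < cb t) F"
  using Fpos rvar unfolding regularly_varying_def by (auto elim: eventually_mono)

lemma scale_ev: "0 < \<kappa> \<Longrightarrow> eventually Q F \<Longrightarrow> eventually (\<lambda>t. Q (t * \<kappa>)) F"
  using eventually_compose_filterlim F_scale[OF omega] by blast

lemma Lf: assumes "0 < r" shows "((\<lambda>t. cb (t * r) / cb t) \<longlongrightarrow> Lf r) F" "0 < Lf r"
proof -
  obtain L where L: "L \<noteq> 0" "((\<lambda>t. cb (t * r) / cb t) \<longlongrightarrow> L) F"
    using rvar assms unfolding regularly_varying_def by blast
  have "Lf r = L" unfolding Lf_def using L(2) Fnt by (simp add: tendsto_Lim)
  then show t: "((\<lambda>t. cb (t * r) / cb t) \<longlongrightarrow> Lf r) F" using L by simp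
  have "eventually (\<lambda>t. 0 \<le> cb (t * r) / cb t) F"
    using Fpos rvar assms unfolding regularly_varying_def by (auto elim!: eventually_mono intro!: divide_nonneg_nonneg less_imp_le)
  then have "0 \<le> Lf r" using tendsto_lowerbound[OF t _ Fnt] by blast
  then show "0 < Lf r" using L \<open>Lf r = L\<close> by simp
qed

lemma Lf1: "Lf 1 = 1"
proof -
  have "eventually (\<lambda>t. cb (t * 1) / cb t = 1) F" using cbpos by (auto elim: eventually_mono)
  then have "((\<lambda>t. cb (t * 1) / cb t) \<longlongrightarrow> 1) F" by (rule tendsto_eventually)
  then show ?thesis unfolding Lf_def using Fnt by (simp add: tendsto_Lim)
qed

lemma cb_scale_lower: assumes "0 < \<kappa>" shows "eventually (\<lambda>t. Lf \<kappa> / 2 * cb t \<le> cb (t * \<kappa>)) F"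
proof -
  have "eventually (\<lambda>t. Lf \<kappa> / 2 < cb (t * \<kappa>) / cb t) F"
    using order_tendstoD(1)[OF Lf(1)[OF assms], of "Lf \<kappa> / 2"] Lf(2)[OF assms] by linarith
  then show ?thesis using cbpos by eventually_elim (simp add: field_simps)
qed

lemma ratio_upper:
  assumes "((\<lambda>x. c x / cb x) \<longlongrightarrow> a) F" "a < b"
  shows "eventually (\<lambda>t. c t \<le> b * cb t) F"
  using order_tendstoD(2)[OF assms] cbpos by eventually_elim (simp add: field_simps)

lemma ratio_lower:
  assumes "((\<lambda>x. c x / cb x) \<longlongrightarrow> a) F" "b < a"
  shows "eventually (\<lambda>t. b * cb t \<le> c t) F"
  using order_tendstoD(1)[OF assms] cbpos by eventually_elim (simp add: field_simps)

lemma ratio_inf: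
  assumes "((\<lambda>x. ereal (c x / cb x)) \<longlongrightarrow> \<infinity>) F"
  shows "eventually (\<lambda>t. B * cb t \<le> c t) F"
proof -
  have "eventually (\<lambda>t. ereal B < ereal (c t / cb t)) F" using assms unfolding tendsto_PInfty by blast
  then show ?thesis using cbpos by eventually_elim (simp add: field_simps)
qed

lemma inf_scaled:
  assumes "((\<lambda>x. ereal (c x / cb x)) \<longlongrightarrow> \<infinity>) F" "0 < \<kappa>"
  shows "eventually (\<lambda>t. B * cb t \<le> c (t * \<kappa>)) F"
proof -
  define B' where "B' = 2 * \<bar>B\<bar> / Lf \<kappa>"
  have Lp: "0 < Lf \<kappa>" using Lf(2)[OF assms(2)] .
  have "eventually (\<lambda>t. B' * cb (t * \<kappa>) \<le> c (t * \<kappa>)) F"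
    using scale_ev[OF assms(2) ratio_inf[OF assms(1)]] .
  then show ?thesis using cb_scale_lower[OF assms(2)] cbpos
  proof eventually_elim
    case (elim t)
    have B'0: "0 \<le> B'" using Lp by (simp add: B'_def)
    have "B * cb t \<le> \<bar>B\<bar> * cb t" using elim(3) by (simp add: mult_right_mono)
    also have "\<dots> = B' * (Lf \<kappa> / 2 * cb t)" using Lp by (simp add: B'_def field_simps)
    also have "\<dots> \<le> B' * cb (t * \<kappa>)" using elim(2) B'0 by (rule mult_left_mono)
    also have "\<dots> \<le> c (t * \<kappa>)" using elim(1) .
    finally show ?case .
  qed
qed

lemma pos_scaled:
  assumes "((\<lambda>x. c x / cb x) \<longlongrightarrow> a) F" "0 < a" "0 < \<kappa>"
  shows "eventually (\<lambda>t. (a / 2 * (Lf \<kappa> / 2)) * cb t \<le> c (t * \<kappa>)) F"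
proof -
  have Lp: "0 < Lf \<kappa>" using Lf(2)[OF assms(3)] .
  have "eventually (\<lambda>t. a / 2 * cb (t * \<kappa>) \<le> c (t * \<kappa>)) F"
    using scale_ev[OF assms(3) ratio_lower[OF assms(1), of "a/2"]] assms(2) by simp
  then show ?thesis using cb_scale_lower[OF assms(3)]
  proof eventually_elim
    case (elim t)
    have "(a / 2 * (Lf \<kappa> / 2)) * cb t = a / 2 * (Lf \<kappa> / 2 * cb t)" by simp
    also have "\<dots> \<le> a / 2 * cb (t * \<kappa>)" using elim(2) assms(2) by (intro mult_left_mono) auto
    finally show ?case using elim(1) by linarith
  qed
qed

lemma tight_ratio:
  assumes "((\<lambda>x. c x / cb x) \<longlongrightarrow> a) F" "0 < a" "0 < r"
  shows "((\<lambda>t. c (t * r) / c t) \<longlongrightarrow> Lf r) F"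
proof -
  have t1: "((\<lambda>t. c (t * r) / cb (t * r)) \<longlongrightarrow> a) F"
    using filterlim_compose[OF assms(1) F_scale[OF omega assms(3)]] by simp
  have "((\<lambda>t. (c (t * r) / cb (t * r)) * (cb (t * r) / cb t) / (c t / cb t)) \<longlongrightarrow> a * Lf r / a) F"
    by (intro tendsto_intros t1 Lf(1)[OF assms(3)] assms(1)) (use assms in simp)
  moreover have "eventually (\<lambda>t. (c (t * r) / cb (t * r)) * (cb (t * r) / cb t) / (c t / cb t) = c (t * r) / c t) F"
    using cbpos scale_ev[OF assms(3) cbpos] by eventually_elim (simp add: field_simps)
  ultimately have "((\<lambda>t. c (t * r) / c t) \<longlongrightarrow> a * Lf r / a) F" by (rule Lim_transform_eventually)
  then show ?thesis using assms(2) by simp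
qed

end


lemma tele: fixes K :: nat shows "(\<Sum>k\<in>{1..K}. Lv k) - (\<Sum>k\<in>{1..K}. Lv (k - 1)) = Lv K - (Lv 0 :: real)"
proof (induction K)
  case (Suc K)
  have "(\<Sum>k\<in>{1..Suc K}. Lv k) = (\<Sum>k\<in>{1..K}. Lv k) + Lv (Suc K)" by simp
  moreover have "(\<Sum>k\<in>{1..Suc K}. Lv (k - 1)) = (\<Sum>k\<in>{1..K}. Lv (k - 1)) + Lv K" by simp
  ultimately show ?case using Suc by simp
qed simp

lemma riem_params:
  fixes Lf :: "real \<Rightarrow> real" and J :: nat
  assumes mono: "\<And>a b. 0 < a \<Longrightarrow> a \<le> b \<Longrightarrow> Lf a \<le> Lf b" and L1: "Lf 1 = 1" and pos: "\<And>a. 0 < a \<Longrightarrow> 0 < Lf a"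
    and J: "0 < J" and K_def: "K = 2 * J"
    and Lv_def: "Lv = (\<lambda>k::nat. if k = 0 then 0 else Lf (real k / real K))"
  shows "(\<Sum>k\<in>{1..K}. Lv k) / real K = (\<Sum>k\<in>{1..K}. Lv (k - 1)) / real K + 1 / real K"
    and "(\<Sum>k\<in>{1..K}. Lv k) / real K \<le> 1"
    and "Lf (1/2) / 2 \<le> (\<Sum>k\<in>{1..K}. Lv (k - 1)) / real K"
proof -
  have K: "0 < K" using J by (simp add: K_def)
  have "Lv K = 1" using K L1 by (simp add: Lv_def)
  then show "(\<Sum>k\<in>{1..K}. Lv k) / real K = (\<Sum>k\<in>{1..K}. Lv (k - 1)) / real K + 1 / real K"
    using tele[of Lv K] K by (simp add: Lv_def field_simps)
  have "(\<Sum>k\<in>{1..K}. Lv k) \<le> (\<Sum>k\<in>{1..K}. 1)"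
  proof (rule sum_mono)
    fix k assume k: "k \<in> {1..K}"
    have "Lf (real k / real K) \<le> Lf 1" using k K by (intro mono) auto
    then show "Lv k \<le> 1" using k L1 by (simp add: Lv_def)
  qed
  then show "(\<Sum>k\<in>{1..K}. Lv k) / real K \<le> 1" using K by simp
  have Lvnn: "0 \<le> Lv k" for k using pos[of "real k / real K"] K by (auto simp: Lv_def)
  have "real J * Lf (1/2) = (\<Sum>k\<in>{J+1..K}. Lf (1/2))" by (simp add: K_def)
  also have "\<dots> \<le> (\<Sum>k\<in>{J+1..K}. Lv (k - 1))"
  proof (rule sum_mono)
    fix k assume k: "k \<in> {J+1..K}"
    then have k1: "k - 1 \<noteq> 0" "real J \<le> real (k - 1)" using J by auto
    have "Lf (1/2) = Lf (real J / real K)" using J by (simp add: K_def)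
    also have "\<dots> \<le> Lf (real (k - 1) / real K)" using J K k1 by (intro mono divide_right_mono) (auto simp: K_def)
    finally show "Lf (1/2) \<le> Lv (k - 1)" using k1 by (simp add: Lv_def)
  qed
  also have "\<dots> \<le> (\<Sum>k\<in>{1..K}. Lv (k - 1))" using Lvnn by (intro sum_mono2) auto
  finally have "real J * Lf (1/2) \<le> (\<Sum>k\<in>{1..K}. Lv (k - 1))" .
  then show "Lf (1/2) / 2 \<le> (\<Sum>k\<in>{1..K}. Lv (k - 1)) / real K" using K J by (simp add: K_def field_simps)
qed



context rnet begin

lemma eq_le:
  assumes w: "wardrop_eq c I P m f" and mnn: "\<And>i. i \<in> I \<Longrightarrow> m i \<ge> 0" and Ine: "I \<noteq> {}"
    and Mdef: "M = (\<Sum>i\<in>I. m i)"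
    and good: "\<And>i. i \<in> I \<Longrightarrow> \<exists>q\<in>P i. path_cost c I P f q \<le> D"
  shows "social_cost E c (edge_load I P f) \<le> real (card E) * D * M"
proof -
  have ff: "feasible_flow I P m f" using w by (simp add: wardrop_eq_def)
  have vi1: "\<And>e. e \<in> E \<Longrightarrow> 0 < edge_load I P f e \<Longrightarrow> c e (edge_load I P f e) \<le> D"
    using VI(1)[of m f f D] w mnn ff good Ine by blast
  have vi2: "0 \<le> D" using VI(2)[of m f f D] w mnn ff good Ine by blast
  have "social_cost E c (edge_load I P f) \<le> (\<Sum>e\<in>E. M * D)"
    unfolding social_cost_def
  proof (rule sum_mono)
    fix e assume e: "e \<in> E"
    define x where "x = edge_load I P f e"
    have x0: "0 \<le> x" "x \<le> M" unfolding x_def Mdef using load_nonneg[OF ff] load_le[OF ff] by auto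
    show "edge_load I P f e * c e (edge_load I P f e) \<le> M * D"
      unfolding x_def[symmetric]
    proof (cases "0 < x")
      case True
      then have "c e x \<le> D" using vi1[OF e] unfolding x_def by blast
      moreover have "0 \<le> c e x" using cost_fn.nonneg[OF cf[OF e] x0(1)] .
      ultimately show "x * c e x \<le> M * D" using x0 by (intro mult_mono) auto
    next
      case False
      then show "x * c e x \<le> M * D" using x0 vi2 by simp
    qed
  qed
  then show ?thesis by (simp add: mult.commute mult.left_commute)
qed

lemma poa_bound:
  fixes K J :: nat
  assumes mnn: "\<And>i. i \<in> I \<Longrightarrow> m i \<ge> 0" and Ine: "I \<noteq> {}"
    and Mdef: "M = (\<Sum>i\<in>I. m i)" and Mpos: "0 < M" and Cm: "0 < Cm"
    and Ei: "Ei \<subseteq> E" and T: "T \<subseteq> E - Ei"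
    and good: "\<And>i. i \<in> I \<Longrightarrow> \<exists>q\<in>P i. set q \<inter> Ei = {}"
    and tau: "0 < \<tau>" "\<tau> \<le> 1" and K: "K = 2 * J" "0 < J" "1 / real K \<le> \<tau>"
    and Lv0: "Lv 0 = 0"
    and U: "U = (\<Sum>k\<in>{1..K}. Lv k) / real K" and l: "l = (\<Sum>k\<in>{1..K}. Lv (k - 1)) / real K"
    and Ul: "U = l + 1 / real K" "U \<le> 1" "lz \<le> l" and lz: "0 < lz" "\<tau> \<le> lz / 2"
    and Aa: "0 \<le> Aa" and dp: "0 < dp"
    and CC: "CC = 3 + 2 * real (card E) * (Aa + 1 + real (card E) * Aa) / dp"
    and theta: "2 * \<tau> * CC / lz \<le> \<theta>"
    and e1: "\<And>e. e \<in> E - Ei \<Longrightarrow> c e M \<le> Aa * Cm"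
    and e2: "\<And>e. e \<in> E - Ei - T \<Longrightarrow> c e M \<le> \<tau> * Cm"
    and e3: "\<And>e. e \<in> Ei \<Longrightarrow> (real (card E) * real (card E) * Aa / \<tau> + real (card E) * Aa + 1) * Cm \<le> c e (M * \<tau>)"
    and e4: "\<And>e z k. e \<in> T \<Longrightarrow> \<tau> * M \<le> z \<Longrightarrow> z \<le> M \<Longrightarrow> k \<in> {1..K} \<Longrightarrow>
               \<bar>c e (z * real k / real K) - Lv k * c e z\<bar> \<le> \<tau> * c e z"
    and optlow: "\<And>y. feasible_flow I P m y \<Longrightarrow> dp * M * Cm \<le> social_cost E c (edge_load I P y)"
  shows "1 \<le> PoA E c I P m \<and> PoA E c I P m \<le> 1 + \<theta>"
proof -
  obtain f where w: "wardrop_eq c I P m f" using exists_wardrop[of m, OF mnn] by blast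
  define fs where "fs = (SOME f. wardrop_eq c I P m f)"
  have ws: "wardrop_eq c I P m fs" unfolding fs_def using someI[of "wardrop_eq c I P m" f, OF w] .
  have ff: "feasible_flow I P m fs" using ws by (simp add: wardrop_eq_def)
  define Eq where "Eq = social_cost E c (edge_load I P fs)"
  have Eq_def': "eq_cost E c I P m = Eq" unfolding Eq_def eq_cost_def fs_def ..
  define D where "D = (\<Sum>e\<in>E - Ei. c e M)"
  have good': "\<exists>q\<in>P i. path_cost c I P fs q \<le> D" if i: "i \<in> I" for i
  proof -
    obtain q where q: "q \<in> P i" "set q \<inter> Ei = {}" using good[OF i] by blast
    have qE: "set q \<subseteq> E - Ei" using subE[OF i q(1)] q(2) by auto
    have "path_cost c I P fs q \<le> (\<Sum>e\<in>set q. c e M)"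
      unfolding path_cost_def
    proof (rule sum_mono)
      fix e assume "e \<in> set q"
      then have e: "e \<in> E" using qE by auto
      show "c e (edge_load I P fs e) \<le> c e M"
        using load_nonneg[OF ff] load_le[OF ff] Mdef Mpos by (intro mono_onD[OF cost_fn.mono[OF cf[OF e]]]) auto
    qed
    also have "\<dots> \<le> D" unfolding D_def using qE finE Mpos
      by (intro sum_mono2) (auto intro!: cost_fn.nonneg[OF cf])
    finally show ?thesis using q by blast
  qed
  have EqD: "Eq \<le> real (card E) * D * M" unfolding Eq_def using eq_le[of m fs M D] ws mnn Ine Mdef good' by blast
  have D0: "0 \<le> D" using VI(2)[of m fs fs D] ws mnn ff good' Ine by blast
  have DA: "D \<le> real (card E) * (Aa * Cm)"
  proof -
    have "D \<le> (\<Sum>e\<in>E - Ei. Aa * Cm)" unfolding D_def using e1 by (rule sum_mono)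
    also have "\<dots> \<le> real (card E) * (Aa * Cm)"
      using card_mono[OF finE, of "E - Ei"] Aa Cm by (simp add: mult_right_mono)
    finally show ?thesis .
  qed
  define nE where "nE = real (card E)"
  have nE0: "0 \<le> nE" by (simp add: nE_def)
  have hI: "D < c e (\<tau> * M) \<and> nE * D * M < \<tau> * M * c e (\<tau> * M)" if e: "e \<in> Ei" for e
  proof -
    define B3 where "B3 = nE * nE * Aa / \<tau> + nE * Aa + 1"
    have ce: "B3 * Cm \<le> c e (\<tau> * M)" using e3[OF e] by (simp add: B3_def nE_def mult.commute)
    have q: "0 \<le> Aa * (Cm * (nE * nE)) / \<tau>" using Cm nE0 Aa tau by simp
    have q2: "B3 * Cm = Cm + Aa * (Cm * nE) + Aa * (Cm * (nE * nE)) / \<tau>" by (simp add: B3_def algebra_simps)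
    have "D \<le> Aa * (Cm * nE)" using DA by (simp add: nE_def algebra_simps)
    then have "D < B3 * Cm" using q q2 Cm by linarith
    moreover have "nE * D * M < \<tau> * M * (B3 * Cm)"
    proof -
      have "nE * D * M \<le> nE * (nE * (Aa * Cm)) * M" using DA nE0 Mpos unfolding nE_def[symmetric]
        by (intro mult_right_mono mult_left_mono) auto
      also have "\<dots> < \<tau> * M * (B3 * Cm)" using tau Mpos Cm nE0 Aa
        by (simp add: B3_def field_simps add_pos_nonneg mult_nonneg_nonneg)
      finally show ?thesis .
    qed
    moreover have "\<tau> * M * (B3 * Cm) \<le> \<tau> * M * c e (\<tau> * M)" using ce tau Mpos by simp
    ultimately show ?thesis using ce by linarith
  qed
  have th0: "0 \<le> \<theta>"
  proof -
    have "0 \<le> CC" unfolding CC using Aa dp nE0 by (simp add: nE_def[symmetric] add_nonneg_nonneg mult_nonneg_nonneg)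
    then show ?thesis using theta tau lz by (smt (verit) divide_nonneg_pos mult_nonneg_nonneg)
  qed
  have Lnn: "0 \<le> social_cost E c (edge_load I P y)" if y: "feasible_flow I P m y" for y
    unfolding social_cost_def using load_nonneg[OF y] cost_fn.nonneg[OF cf]
    by (intro sum_nonneg mult_nonneg_nonneg) auto
  have key: "Eq \<le> (1 + \<theta>) * social_cost E c (edge_load I P y)" if y: "feasible_flow I P m y" for y
  proof -
    define L where "L = social_cost E c (edge_load I P y)"
    have L0: "0 \<le> L" unfolding L_def using Lnn[OF y] .
    show ?thesis
    proof (cases "L \<le> nE * D * M")
      case False
      then have "Eq \<le> L" using EqD by (simp add: nE_def)
      also have "\<dots> \<le> (1 + \<theta>) * L" using L0 th0 by (simp add: distrib_right mult_nonneg_nonneg)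
      finally show ?thesis unfolding L_def .
    next
      case True
      have Kp: "0 < K" using K by simp
      have ln: "0 \<le> l - \<tau>" "l - \<tau> \<le> 1" using Ul lz tau K(3) by (auto, smt (verit) divide_nonneg_nonneg of_nat_0_le_iff)
      have un: "0 \<le> U + \<tau>" using Ul(1) tau Kp by (smt (verit) divide_nonneg_nonneg of_nat_0_le_iff ln(1))
      have det: "(l - \<tau>) * Eq \<le> (U + \<tau>) * L + 2 * nE * (\<tau> * M * (Aa * Cm) + \<tau> * M * Cm + \<tau> * M * D)"
      proof -
        have a1: "0 < \<tau>" "\<tau> \<le> 1" "0 \<le> \<tau>" "0 < K" "0 \<le> Aa * Cm" "0 \<le> Cm" using tau Kp Aa Cm by auto
        have a2: "\<And>e. e \<in> T \<Longrightarrow> c e M \<le> Aa * Cm" using e1 T by blast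
        have a3: "\<And>e. e \<in> E - Ei - T \<Longrightarrow> c e M \<le> \<tau> * Cm" by (rule e2)
        have a4: "\<And>e. e \<in> Ei \<Longrightarrow> D < c e (\<tau> * M) \<and> real (card E) * D * M < \<tau> * M * c e (\<tau> * M)"
          using hI unfolding nE_def by blast
        have a5: "\<And>e z k. e \<in> T \<Longrightarrow> \<tau> * M \<le> z \<Longrightarrow> z \<le> M \<Longrightarrow> k \<in> {1..K} \<Longrightarrow>
               \<bar>c e (z * real k / real K) - Lv k * c e z\<bar> \<le> \<tau> * c e z" by (rule e4)
        have a6: "social_cost E c (edge_load I P y) \<le> real (card E) * D * M" using True unfolding L_def nE_def .
        show ?thesis unfolding Eq_def L_def nE_def
          by (rule det_main[where m=m and f=fs and y=y and M=M and Ei=Ei and T=T and D=D and \<epsilon>=\<tau> and \<eta>=\<tau>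
                and K=K and Aa=Aa and Cm=Cm and Lv=Lv and U=U and l=l];
              (fact ws mnn Ine y Mdef Ei T good D_def a1 a2 a3 a4 a5 a6 Lv0 U l ln un)?)
      qed
      have MC: "M * Cm \<le> L / dp" using optlow[OF y] dp unfolding L_def by (simp add: field_simps)
      have MC0: "0 \<le> M * Cm" using Mpos Cm by simp
      define G where "G = Aa + 1 + nE * Aa"
      have G0: "0 \<le> G" unfolding G_def using Aa nE0 by simp
      have err: "2 * nE * (\<tau> * M * (Aa * Cm) + \<tau> * M * Cm + \<tau> * M * D) \<le> 2 * nE * \<tau> * G * (M * Cm)"
      proof -
        have "\<tau> * M * D \<le> \<tau> * M * (nE * (Aa * Cm))" using DA tau Mpos unfolding nE_def by simp
        then have "\<tau> * M * (Aa * Cm) + \<tau> * M * Cm + \<tau> * M * D \<le> \<tau> * G * (M * Cm)"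
          unfolding G_def by (simp add: algebra_simps)
        then show ?thesis using nE0 by (simp add: mult_left_mono mult.assoc)
      qed
      also have "\<dots> \<le> 2 * nE * \<tau> * G * (L / dp)" using MC nE0 tau G0 by (intro mult_left_mono) auto
      finally have err': "2 * nE * (\<tau> * M * (Aa * Cm) + \<tau> * M * Cm + \<tau> * M * D) \<le> 2 * nE * \<tau> * G * L / dp" by simp
      have UL: "(U + \<tau>) * L \<le> (l + 2 * \<tau>) * L" using Ul(1) K(3) L0 by (intro mult_right_mono) auto
      have CC': "CC = 3 + 2 * nE * G / dp" unfolding CC G_def nE_def by simp
      have "(l - \<tau>) * Eq \<le> (l - \<tau>) * L + \<tau> * CC * L"
      proof -
        have "(l - \<tau>) * Eq \<le> (l + 2 * \<tau>) * L + 2 * nE * \<tau> * G * L / dp" using det err' UL by linarith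
        also have "\<dots> = (l - \<tau>) * L + \<tau> * CC * L" unfolding CC' using dp by (simp add: field_simps)
        finally show ?thesis .
      qed
      then have "Eq \<le> L + \<tau> * CC * L / (l - \<tau>)"
      proof -
        assume h: "(l - \<tau>) * Eq \<le> (l - \<tau>) * L + \<tau> * CC * L"
        have lt: "0 < l - \<tau>" using Ul lz by linarith
        then show ?thesis using h by (simp add: field_simps)
      qed
      also have "\<tau> * CC * L / (l - \<tau>) \<le> \<tau> * CC * L / (lz / 2)"
      proof (rule divide_left_mono)
        show "0 \<le> \<tau> * CC * L" using tau L0 Aa dp nE0 G0 by (simp add: CC' add_nonneg_nonneg)
        show "lz / 2 \<le> l - \<tau>" "0 < (l - \<tau>) * (lz / 2)" using Ul lz by auto
      qed
      also have "\<tau> * CC * L / (lz / 2) = (2 * \<tau> * CC / lz) * L" by simp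
      also have "\<dots> \<le> \<theta> * L" using theta L0 by (rule mult_right_mono)
      finally show ?thesis unfolding L_def by (simp add: algebra_simps)
    qed
  qed
  define S where "S = {social_cost E c (edge_load I P y) |y. feasible_flow I P m y}"
  have Opt: "opt_cost E c I P m = Inf S" unfolding opt_cost_def S_def ..
  have Sne: "S \<noteq> {}" using ff unfolding S_def by blast
  have Sbdd: "bdd_below S" unfolding S_def using Lnn by (auto intro!: bdd_belowI)
  have OE: "Inf S \<le> Eq" unfolding Eq_def by (rule cInf_lower[OF _ Sbdd]) (use ff S_def in blast)
  have Olow: "dp * M * Cm \<le> Inf S" by (rule cInf_greatest[OF Sne]) (auto simp: S_def optlow)
  have Opos: "0 < Inf S" using Olow dp Mpos Cm by (smt (verit) mult_pos_pos)
  have EO: "Eq / (1 + \<theta>) \<le> Inf S"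
    by (rule cInf_greatest[OF Sne]) (use key th0 in \<open>auto simp: S_def field_simps\<close>)
  have PoA: "PoA E c I P m = Eq / Inf S" unfolding PoA_def Opt Eq_def' using Opos by simp
  have "1 \<le> Eq / Inf S" using OE Opos by simp
  moreover have "Eq / Inf S \<le> 1 + \<theta>" using EO Opos th0 by (simp add: field_simps)
  ultimately show ?thesis unfolding PoA by simp
qed

end


lemma half_lt: "0 < (x::real) \<Longrightarrow> x / 2 < x" by simp


lemma rnet_of:
  assumes net: "routing_network src tgt E I orig dest P c"
  shows "rnet E I P c"
  unfolding rnet_def cost_fn_def using net unfolding routing_network_def is_path_def
  by (intro conjI allI impI ballI) auto

theorem theorem6p2:
  fixes src tgt :: "'e \<Rightarrow> 'v" and E :: "'e set" and I :: "'i set"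
    and orig dest :: "'i \<Rightarrow> 'v" and P :: "'i \<Rightarrow> 'e list set"
    and c :: "'e \<Rightarrow> real \<Rightarrow> real" and m :: "nat \<Rightarrow> 'i \<Rightarrow> real"
    and cb :: "real \<Rightarrow> real" and F :: "real filter"
  assumes net: "routing_network src tgt E I orig dest P c"
    and dem_nonneg: "\<And>n i. i \<in> I \<Longrightarrow> m n i \<ge> 0"
    and inflow_pos: "\<And>n. (\<Sum>i\<in>I. m n i) > 0"
    and omega: "F = at_top \<or> F = at_right 0"
    and bench: "benchmark F cb E c"
    and a: "filterlim (\<lambda>n. \<Sum>i\<in>I. m n i) F sequentially"
    and b: "\<And>i. i \<in> I \<Longrightarrow> alpha_od F cb c P i < \<infinity>"
    and c_liminf: "Liminf sequentially
            (\<lambda>n. ereal (\<Sum>i\<in>{i\<in>I. alpha_od F cb c P i > 0}. m n i / (\<Sum>j\<in>I. m n j))) > 0"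
  shows "(\<lambda>n. PoA E c I P (m n)) \<longlonglongrightarrow> 1"
proof -
  interpret N: rnet E I P c by (rule rnet_of[OF net])
  interpret R: rv F cb using omega bench by unfold_locales (auto simp: benchmark_def)
  define M where "M n = (\<Sum>i\<in>I. m n i)" for n
  have Mpos: "0 < M n" for n using inflow_pos by (simp add: M_def)
  have aM: "filterlim M F sequentially" using a unfolding M_def by simp
  have Ine: "I \<noteq> {}" using Mpos[of 0] by (auto simp: M_def)
  have cbM: "0 < cb (M n)" for n using R.rvar Mpos unfolding regularly_varying_def by blast
  define \<alpha> where "\<alpha> = alpha_edge F cb c"
  have \<alpha>lim: "((\<lambda>x. ereal (c e x / cb x)) \<longlongrightarrow> \<alpha> e) F" if e: "e \<in> E" for e
  proof -
    obtain z where z: "((\<lambda>x. ereal (c e x / cb x)) \<longlongrightarrow> z) F" using bench e unfolding benchmark_def by blast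
    then have "\<alpha> e = z" unfolding \<alpha>_def alpha_edge_def using R.Fnt by (simp add: tendsto_Lim)
    then show ?thesis using z by simp
  qed
  have \<alpha>0: "0 \<le> \<alpha> e" if e: "e \<in> E" for e
  proof (rule tendsto_lowerbound[OF \<alpha>lim[OF e] _ R.Fnt])
    show "\<forall>\<^sub>F x in F. 0 \<le> ereal (c e x / cb x)" using R.Fpos R.cbpos
      by eventually_elim (use cost_fn.nonneg[OF N.cf[OF e]] in auto)
  qed
  define Ei where "Ei = {e\<in>E. \<alpha> e = \<infinity>}"
  define T where "T = {e\<in>E. 0 < \<alpha> e \<and> \<alpha> e < \<infinity>}"
  define ar where "ar e = real_of_ereal (\<alpha> e)" for e
  have Ei: "Ei \<subseteq> E" and T: "T \<subseteq> E - Ei" unfolding Ei_def T_def by auto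
  have afin: "\<alpha> e = ereal (ar e)" "0 \<le> ar e" "((\<lambda>x. c e x / cb x) \<longlongrightarrow> ar e) F" if e: "e \<in> E - Ei" for e
  proof -
    have "\<bar>\<alpha> e\<bar> \<noteq> \<infinity>" using \<alpha>0[of e] e unfolding Ei_def by auto
    then show ae: "\<alpha> e = ereal (ar e)" unfolding ar_def by (simp add: ereal_real')
    then show "0 \<le> ar e" using \<alpha>0[of e] e by simp
    show "((\<lambda>x. c e x / cb x) \<longlongrightarrow> ar e) F" using \<alpha>lim[of e] e ae by simp
  qed
  have aT: "0 < ar e" if "e \<in> T" for e using afin(1)[of e] that T unfolding T_def by auto
  have aZ: "ar e = 0" if "e \<in> E - Ei - T" for e using afin(1,2)[of e] that unfolding T_def Ei_def by auto
  have Ei_inf: "((\<lambda>x. ereal (c e x / cb x)) \<longlongrightarrow> \<infinity>) F" if "e \<in> Ei" for e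
    using \<alpha>lim[of e] that unfolding Ei_def by auto
  define mx where "mx p = Max (insert 0 (\<alpha> ` set p))" for p
  have aod: "alpha_od F cb c P i = Min (mx ` P i)" for i unfolding alpha_od_def mx_def \<alpha>_def ..
  have mx_ge: "\<alpha> e \<le> mx p" if "e \<in> set p" for e p unfolding mx_def using that by (intro Max_ge) auto
  have mx_in: "mx p \<in> insert 0 (\<alpha> ` set p)" for p unfolding mx_def by (intro Max_in) auto
  have best: "\<exists>q\<in>P i. mx q = alpha_od F cb c P i" if i: "i \<in> I" for i
  proof -
    have "Min (mx ` P i) \<in> mx ` P i" using N.finP[OF i] N.neP[OF i] by (intro Min_in) auto
    then show ?thesis unfolding aod by auto
  qed
  have good: "\<exists>q\<in>P i. set q \<inter> Ei = {}" if i: "i \<in> I" for i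
  proof -
    obtain q where q: "q \<in> P i" "mx q = alpha_od F cb c P i" using best[OF i] by blast
    have "\<alpha> e \<noteq> \<infinity>" if "e \<in> set q" for e using mx_ge[OF that] q(2) b[OF i] by auto
    then show ?thesis using q(1) unfolding Ei_def by auto
  qed
  define Tp where "Tp = {i\<in>I. alpha_od F cb c P i > 0}"
  have Tp_edge: "\<exists>e\<in>set p. 0 < \<alpha> e" if i: "i \<in> Tp" and p: "p \<in> P i" for i p
  proof -
    have iI: "i \<in> I" using i by (simp add: Tp_def)
    have "alpha_od F cb c P i \<le> mx p" unfolding aod using N.finP[OF iI] p by (intro Min_le) auto
    moreover have "0 < alpha_od F cb c P i" using i by (simp add: Tp_def)
    ultimately have "0 < mx p" using less_le_trans by blast
    then show ?thesis using mx_in[of p] by auto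
  qed
  have Tp_tight: "\<exists>e\<in>T. True" if i: "i \<in> Tp" for i
  proof -
    have iI: "i \<in> I" using i by (simp add: Tp_def)
    obtain q where q: "q \<in> P i" "mx q = alpha_od F cb c P i" using best[OF iI] by blast
    have "0 < mx q" "mx q < \<infinity>" using q(2) i b[OF iI] by (auto simp: Tp_def)
    then obtain e where "e \<in> set q" "\<alpha> e = mx q" using mx_in[of q] by auto
    moreover have "e \<in> E" using N.subE[OF iI q(1)] \<open>e \<in> set q\<close> by auto
    ultimately show ?thesis using \<open>0 < mx q\<close> \<open>mx q < \<infinity>\<close> unfolding T_def by auto
  qed
  obtain \<delta>0 where d0: "0 < \<delta>0" "eventually (\<lambda>n. \<delta>0 < (\<Sum>i\<in>Tp. m n i / M n)) sequentially"
  proof -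
    obtain z where z: "0 < ereal z" "ereal z < Liminf sequentially
            (\<lambda>n. ereal (\<Sum>i\<in>{i\<in>I. alpha_od F cb c P i > 0}. m n i / (\<Sum>j\<in>I. m n j)))"
      using ereal_dense2[OF c_liminf] by blast
    have "eventually (\<lambda>n. ereal z < ereal (\<Sum>i\<in>Tp. m n i / M n)) sequentially"
      using less_LiminfD[OF z(2)] unfolding Tp_def M_def .
    then show ?thesis using that z(1) by auto
  qed
  have Tpne: "Tp \<noteq> {}"
  proof
    assume "Tp = {}"
    obtain n where "\<delta>0 < (\<Sum>i\<in>Tp. m n i / M n)" using eventually_happens'[OF _ d0(2)] by auto
    then show False using \<open>Tp = {}\<close> d0(1) by simp
  qed
  obtain e0 where e0: "e0 \<in> T" using Tp_tight Tpne by blast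
  have Lmono: "R.Lf a1 \<le> R.Lf b1" if ab: "0 < a1" "a1 \<le> b1" for a1 b1
  proof -
    have e0E: "e0 \<in> E - Ei" using e0 T by auto
    note lim0 = afin(3)[OF e0E]
    have pos0: "0 < ar e0" using aT[OF e0] .
    show ?thesis
    proof (rule tendsto_le[OF R.Fnt R.tight_ratio[OF lim0 pos0, of b1] R.tight_ratio[OF lim0 pos0, of a1]])
      show "0 < b1" "0 < a1" using ab by auto
      show "\<forall>\<^sub>F x in F. c e0 (x * a1) / c e0 x \<le> c e0 (x * b1) / c e0 x"
        using R.ratio_lower[OF lim0 half_lt[OF pos0]] R.cbpos R.Fpos
      proof eventually_elim
        case (elim t)
        have "0 < ar e0 / 2 * cb t" using elim(2) pos0 by simp
        then have "0 < c e0 t" using elim(1) by linarith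
        moreover have "c e0 (t * a1) \<le> c e0 (t * b1)" using ab elim(3) e0E
          by (intro mono_onD[OF cost_fn.mono[OF N.cf]]) (auto intro: mult_left_mono)
        ultimately show ?case by (simp add: divide_right_mono)
      qed
    qed
  qed
  define Nn where "Nn = (\<Sum>i\<in>I. card (P i))"
  have cardP: "0 < card (P i)" "card (P i) \<le> Nn" if i: "i \<in> I" for i
  proof -
    show "0 < card (P i)" using N.finP[OF i] N.neP[OF i] by (simp add: card_gt_0_iff)
    show "card (P i) \<le> Nn" unfolding Nn_def using N.finI i by (intro member_le_sum) auto
  qed
  have Nnpos: "0 < Nn"
  proof -
    obtain i where "i \<in> I" using Ine by blast
    then show ?thesis using cardP[of i] by linarith
  qed
  have cIpos: "0 < card I" using Ine N.finI by (simp add: card_gt_0_iff)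
  define \<kappa> where "\<kappa> = \<delta>0 / (real (card I) * real Nn)"
  have kpos: "0 < \<kappa>" unfolding \<kappa>_def using d0(1) Nnpos cIpos by simp
  define \<beta> where "\<beta> = min 1 (Min ((\<lambda>e. ar e / 2 * (R.Lf \<kappa> / 2)) ` T))"
  have finT: "finite T" using N.finE T_def by simp
  have bpos: "0 < \<beta>"
  proof -
    have "0 < Min ((\<lambda>e. ar e / 2 * (R.Lf \<kappa> / 2)) ` T)"
      using finT e0 aT R.Lf(2)[OF kpos] by (subst Min_gr_iff) auto
    then show ?thesis by (simp add: \<beta>_def)
  qed
  define Epos where "Epos = {e\<in>E. 0 < \<alpha> e}"
  have ev5: "eventually (\<lambda>t. \<forall>e\<in>Epos. \<beta> * cb t \<le> c e (t * \<kappa>)) F"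
  proof (rule eventually_ball_finite)
    show "finite Epos" using N.finE by (simp add: Epos_def)
    show "\<forall>e\<in>Epos. \<forall>\<^sub>F t in F. \<beta> * cb t \<le> c e (t * \<kappa>)"
    proof
      fix e assume e: "e \<in> Epos"
      show "\<forall>\<^sub>F t in F. \<beta> * cb t \<le> c e (t * \<kappa>)"
      proof (cases "e \<in> Ei")
        case True
        show ?thesis using R.inf_scaled[OF Ei_inf[OF True] kpos] .
      next
        case False
        then have eT: "e \<in> T" using e unfolding Epos_def T_def Ei_def by auto
        have eE: "e \<in> E - Ei" using eT T by auto
        have bl: "\<beta> \<le> ar e / 2 * (R.Lf \<kappa> / 2)" unfolding \<beta>_def using finT eT
          by (intro min.coboundedI2 Min_le) auto
        show ?thesis using R.pos_scaled[OF afin(3)[OF eE] aT[OF eT] kpos] R.cbpos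
        proof eventually_elim
          case (elim t)
          have "\<beta> * cb t \<le> (ar e / 2 * (R.Lf \<kappa> / 2)) * cb t" using bl elim(2) by (intro mult_right_mono) auto
          then show ?case using elim(1) by linarith
        qed
      qed
    qed
  qed
  define dp where "dp = \<kappa> * \<beta>"
  have dppos: "0 < dp" using kpos bpos by (simp add: dp_def)
  have optlow: "dp * M n * cb (M n) \<le> social_cost E c (edge_load I P y)"
    if n: "\<delta>0 < (\<Sum>i\<in>Tp. m n i / M n)" "\<forall>e\<in>Epos. \<beta> * cb (M n) \<le> c e (M n * \<kappa>)"
      and y: "feasible_flow I P (m n) y" for n y
  proof -
    have "\<exists>i\<in>Tp. \<delta>0 / real (card I) \<le> m n i / M n"
    proof (rule ccontr)
      assume "\<not> ?thesis"
      then have "(\<Sum>i\<in>Tp. m n i / M n) \<le> (\<Sum>i\<in>Tp. \<delta>0 / real (card I))" by (intro sum_mono) auto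
      also have "\<dots> = real (card Tp) * (\<delta>0 / real (card I))" by simp
      also have "\<dots> \<le> real (card I) * (\<delta>0 / real (card I))"
        using card_mono[OF N.finI, of Tp] d0(1) cIpos by (intro mult_right_mono) (auto simp: Tp_def)
      also have "\<dots> = \<delta>0" using cIpos by simp
      finally show False using n(1) by simp
    qed
    then obtain i where i: "i \<in> Tp" "\<delta>0 / real (card I) \<le> m n i / M n" by blast
    have iI: "i \<in> I" using i by (simp add: Tp_def)
    have mi: "\<kappa> * M n * real Nn \<le> m n i"
    proof -
      have "\<delta>0 / real (card I) * M n \<le> m n i" using i(2) Mpos[of n] by (simp add: field_simps)
      then show ?thesis unfolding \<kappa>_def using Nnpos cIpos by (simp add: field_simps)
    qed
    have "\<exists>p\<in>P i. m n i / real (card (P i)) \<le> y p"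
    proof (rule ccontr)
      assume "\<not> ?thesis"
      then have "(\<Sum>p\<in>P i. y p) < (\<Sum>p\<in>P i. m n i / real (card (P i)))"
        using N.finP[OF iI] N.neP[OF iI] by (intro sum_strict_mono) auto
      also have "\<dots> = m n i" using cardP(1)[OF iI] by simp
      finally show False using y iI by (simp add: feasible_flow_def)
    qed
    then obtain p where p: "p \<in> P i" "m n i / real (card (P i)) \<le> y p" by blast
    have pA: "p \<in> all_paths I P" using p iI by (auto simp: N.A_iff)
    have mnn: "0 \<le> m n i" using dem_nonneg iI by simp
    have "\<kappa> * M n \<le> m n i / real (card (P i))"
    proof -
      have "\<kappa> * M n * real (card (P i)) \<le> \<kappa> * M n * real Nn"
        using cardP(2)[OF iI] kpos Mpos[of n] by (intro mult_left_mono) auto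
      then show ?thesis using mi cardP(1)[OF iI] by (simp add: field_simps)
    qed
    then have yp: "\<kappa> * M n \<le> y p" using p(2) by simp
    obtain e where e: "e \<in> set p" "0 < \<alpha> e" using Tp_edge[OF i(1) p(1)] by blast
    have eE: "e \<in> E" using N.subE[OF iI p(1)] e by auto
    have eP: "e \<in> Epos" using eE e by (simp add: Epos_def)
    define ye where "ye = edge_load I P y e"
    have ye: "\<kappa> * M n \<le> ye" using yp N.path_le_load[OF y pA e(1)] unfolding ye_def by simp
    have kM0: "0 \<le> \<kappa> * M n" using kpos Mpos[of n] by simp
    have "dp * M n * cb (M n) = (\<kappa> * M n) * (\<beta> * cb (M n))" by (simp add: dp_def)
    also have "\<dots> \<le> ye * c e ye"
    proof (rule mult_mono)
      show "\<beta> * cb (M n) \<le> c e ye"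
      proof -
        have "\<beta> * cb (M n) \<le> c e (M n * \<kappa>)" using n(2) eP by blast
        also have "\<dots> \<le> c e ye" using ye kM0 by (intro mono_onD[OF cost_fn.mono[OF N.cf[OF eE]]]) (auto simp: mult.commute)
        finally show ?thesis .
      qed
      show "0 \<le> \<beta> * cb (M n)" using bpos cbM[of n] by simp
    qed (use ye kM0 in auto)
    also have "\<dots> \<le> social_cost E c (edge_load I P y)"
      unfolding social_cost_def ye_def using eE N.finE N.load_nonneg[OF y] cost_fn.nonneg[OF N.cf]
      by (intro member_le_sum mult_nonneg_nonneg) auto
    finally show ?thesis .
  qed
  have main: "eventually (\<lambda>n. 1 \<le> PoA E c I P (m n) \<and> PoA E c I P (m n) \<le> 1 + \<theta>) sequentially"
    if th: "0 < \<theta>" for \<theta>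
  proof -
    define nE where "nE = real (card E)"
    have nE0: "0 \<le> nE" by (simp add: nE_def)
    define Aa where "Aa = (\<Sum>e\<in>E - Ei. ar e + 1)"
    have Aa_ge: "ar e + 1 \<le> Aa" if e: "e \<in> E - Ei" for e
      unfolding Aa_def using e N.finE afin(2) by (intro member_le_sum) (auto simp: add_nonneg_nonneg)
    have Aa0: "0 \<le> Aa" unfolding Aa_def using afin(2) by (intro sum_nonneg) (auto simp: add_nonneg_nonneg)
    define l0 where "l0 = R.Lf (1/2) / 2"
    have l0pos: "0 < l0" using R.Lf(2)[of "1/2"] by (simp add: l0_def)
    define C1 where "C1 = 3 + 2 * real (card E) * (Aa + 1 + real (card E) * Aa) / dp"
    have C1pos: "0 < C1" unfolding C1_def using Aa0 dppos by (simp add: add_pos_nonneg)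
    define \<tau> where "\<tau> = min (l0 / 2) (min 1 (\<theta> * l0 / (2 * C1)))"
    have tau: "0 < \<tau>" "\<tau> \<le> 1" "\<tau> \<le> l0 / 2" using l0pos th C1pos by (auto simp: \<tau>_def)
    have theta: "2 * \<tau> * C1 / l0 \<le> \<theta>"
    proof -
      have "\<tau> \<le> \<theta> * l0 / (2 * C1)" by (simp add: \<tau>_def)
      then have "2 * \<tau> * C1 \<le> \<theta> * l0" using C1pos by (simp add: field_simps)
      then show ?thesis using l0pos by (simp add: field_simps)
    qed
    define J where "J = nat \<lceil>1 / \<tau>\<rceil> + 1"
    define K where "K = 2 * J"
    have J0: "0 < J" by (simp add: J_def)
    have Kt: "1 / real K \<le> \<tau>"
    proof -
      have "1 / \<tau> \<le> real J" unfolding J_def by linarith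
      then have "1 / \<tau> \<le> real K" unfolding K_def by simp
      then show ?thesis using tau(1) J0 by (simp add: K_def field_simps)
    qed
    have Kpos: "0 < K" using J0 by (simp add: K_def)
    define Lv where "Lv = (\<lambda>k::nat. if k = 0 then 0 else R.Lf (real k / real K))"
    define U where "U = (\<Sum>k\<in>{1..K}. Lv k) / real K"
    define l where "l = (\<Sum>k\<in>{1..K}. Lv (k - 1)) / real K"
    note rp = riem_params[OF Lmono R.Lf1 R.Lf(2) J0 K_def Lv_def]
    have Ul: "U = l + 1 / real K" "U \<le> 1" "l0 \<le> l" using rp unfolding U_def l_def l0_def by auto
    have Lv0: "Lv 0 = 0" by (simp add: Lv_def)
    define B3 where "B3 = real (card E) * real (card E) * Aa / \<tau> + real (card E) * Aa + 1"
    have f1: "eventually (\<lambda>t. \<forall>e\<in>E - Ei. c e t \<le> Aa * cb t) F"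
    proof (rule eventually_ball_finite)
      show "finite (E - Ei)" using N.finE by simp
      show "\<forall>e\<in>E - Ei. \<forall>\<^sub>F t in F. c e t \<le> Aa * cb t"
      proof
        fix e assume e: "e \<in> E - Ei"
        show "\<forall>\<^sub>F t in F. c e t \<le> Aa * cb t"
          using R.ratio_upper[OF afin(3)[OF e] less_add_one[of "ar e"]] R.cbpos
        proof eventually_elim
          case (elim t)
          have "(ar e + 1) * cb t \<le> Aa * cb t" using Aa_ge[OF e] elim(2) by (intro mult_right_mono) auto
          then show ?case using elim(1) by linarith
        qed
      qed
    qed
    have f2: "eventually (\<lambda>t. \<forall>e\<in>E - Ei - T. c e t \<le> \<tau> * cb t) F"
    proof (rule eventually_ball_finite)
      show "finite (E - Ei - T)" using N.finE by simp
      show "\<forall>e\<in>E - Ei - T. \<forall>\<^sub>F t in F. c e t \<le> \<tau> * cb t"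
      proof
        fix e assume e: "e \<in> E - Ei - T"
        have e': "e \<in> E - Ei" using e by auto
        show "\<forall>\<^sub>F t in F. c e t \<le> \<tau> * cb t"
        proof -
          have "ar e < \<tau>" using aZ[OF e] tau by simp
          then show ?thesis using R.ratio_upper[OF afin(3)[OF e']] by blast
        qed
      qed
    qed
    have f3: "eventually (\<lambda>t. \<forall>e\<in>Ei. B3 * cb t \<le> c e (t * \<tau>)) F"
    proof (rule eventually_ball_finite)
      show "finite Ei" using N.finE Ei finite_subset by blast
      show "\<forall>e\<in>Ei. \<forall>\<^sub>F t in F. B3 * cb t \<le> c e (t * \<tau>)"
        using R.inf_scaled[OF Ei_inf tau(1)] by blast
    qed
    have f4: "eventually (\<lambda>t. \<forall>e\<in>T. \<forall>k\<in>{1..K}. \<bar>c e (t * real k / real K) - Lv k * c e t\<bar> \<le> \<tau> * c e t) F"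
    proof (rule eventually_ball_finite[OF finT], rule ballI, rule eventually_ball_finite, simp, rule ballI)
      fix e k assume e: "e \<in> T" and k: "k \<in> {1..K}"
      have eE: "e \<in> E - Ei" using e T by auto
      have rk: "0 < real k / real K" using k Kpos by auto
      have Lvk: "Lv k = R.Lf (real k / real K)" using k by (simp add: Lv_def)
      have lim: "((\<lambda>t. c e (t * (real k / real K)) / c e t) \<longlongrightarrow> Lv k) F"
        unfolding Lvk by (rule R.tight_ratio[OF afin(3)[OF eE] aT[OF e] rk])
      have "eventually (\<lambda>t. dist (c e (t * (real k / real K)) / c e t) (Lv k) < \<tau>) F"
        using lim tau(1) by (rule tendstoD)
      then show "\<forall>\<^sub>F t in F. \<bar>c e (t * real k / real K) - Lv k * c e t\<bar> \<le> \<tau> * c e t"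
        using R.ratio_lower[OF afin(3)[OF eE] half_lt[OF aT[OF e]]] R.cbpos
      proof eventually_elim
        case (elim t)
        have "0 < ar e / 2 * cb t" using elim(3) aT[OF e] by simp
        then have cp: "0 < c e t" using elim(2) by linarith
        have "\<bar>c e (t * real k / real K) - Lv k * c e t\<bar> = c e t * \<bar>c e (t * (real k / real K)) / c e t - Lv k\<bar>"
          using cp by (simp add: abs_mult[symmetric] field_simps)
        also have "\<dots> \<le> c e t * \<tau>" using elim(1) cp by (intro mult_left_mono) (auto simp: dist_real_def)
        finally show ?case by (simp add: mult.commute)
      qed
    qed
    note g1 = eventually_compose_filterlim[OF f1 aM]
    note g2 = eventually_compose_filterlim[OF f2 aM]
    note g3 = eventually_compose_filterlim[OF f3 aM]
    note g4 = F_trans[OF omega f4 aM tau(1)]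
    note g5 = eventually_compose_filterlim[OF ev5 aM]
    show ?thesis using g1 g2 g3 g4 g5 d0(2)
    proof eventually_elim
      case (elim n)
      have h1: "\<And>e. e \<in> E - Ei \<Longrightarrow> c e (M n) \<le> Aa * cb (M n)" using elim(1) by blast
      have h2: "\<And>e. e \<in> E - Ei - T \<Longrightarrow> c e (M n) \<le> \<tau> * cb (M n)" using elim(2) by blast
      have h3: "\<And>e. e \<in> Ei \<Longrightarrow> (real (card E) * real (card E) * Aa / \<tau> + real (card E) * Aa + 1) * cb (M n) \<le> c e (M n * \<tau>)"
        using elim(3) unfolding B3_def by blast
      have h4: "\<And>e z k. e \<in> T \<Longrightarrow> \<tau> * M n \<le> z \<Longrightarrow> z \<le> M n \<Longrightarrow> k \<in> {1..K} \<Longrightarrow>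
               \<bar>c e (z * real k / real K) - Lv k * c e z\<bar> \<le> \<tau> * c e z" using elim(4) by blast
      have h5: "\<And>y. feasible_flow I P (m n) y \<Longrightarrow> dp * M n * cb (M n) \<le> social_cost E c (edge_load I P y)"
        using optlow elim(5,6) by blast
      have mnn: "\<And>i. i \<in> I \<Longrightarrow> m n i \<ge> 0" using dem_nonneg by blast
      show ?case
        by (rule N.poa_bound[where m="m n" and M="M n" and Cm="cb (M n)" and Ei=Ei and T=T and \<tau>=\<tau>
              and K=K and J=J and Lv=Lv and U=U and l=l and lz=l0 and Aa=Aa and dp=dp and CC=C1 and \<theta>=\<theta>];
            (fact mnn Ine Mpos cbM Ei T good tau Kt J0 K_def Lv0 U_def l_def Ul l0pos Aa0 dppos C1_def theta h1 h2 h3 h4 h5)?)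
         (simp_all add: M_def l0pos tau)
    qed
  qed
  show ?thesis
  proof (rule tendstoI)
    fix r :: real assume r: "0 < r"
    show "eventually (\<lambda>n. dist (PoA E c I P (m n)) 1 < r) sequentially"
    proof -
      have r2: "0 < r / 2" using r by simp
      show ?thesis using main[OF r2] by (rule eventually_mono) (use r in \<open>auto simp: dist_real_def\<close>)
    qed
  qed
qed


end
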